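(* There are absolute constants $c_0,c>0$ such that the following holds. Let $\mathcal{F}$ be a finite class of functions $\mathcal{S}\times\mathcal{A}\to[0,V_{\max}]$, $\Pi$ a finite class of policies, and $\pi_{\mathrm{cp}}\in\Pi$. Assume (1) $C_{\pi_{\mathrm{cp}}}:=\|d^{\pi_{\mathrm{cp}}}/d^D\|_\infty<\infty$ and $\mathcal{T}^{\pi_{\mathrm{cp}}}f\in\mathcal{F}$ for all $f\in\mathcal{F}$; (2) $Q^\pi\in\mathcal{F}$ for all $\pi\in\Pi$. Let $\mathcal{D}$ consist of $n$ i.i.d. samples from $D$, let $\delta\in(0,1)$, $\epsilon_0=c_0V_{\max}^2\log(|\mathcal{F}||\Pi|/\delta)/n$, and for $\pi\in\Pi$ define the version space $\mathcal{F}^\pi_{\epsilon_0}=\{f\in\mathcal{F}:\widehat{\mathcal{E}}(f;\pi)\le\epsilon_0\}$ and $J^-_{\mathrm{VS}}(\pi)=\min_{f\in\mathcal{F}^\pi_{\epsilon_0}}J_f(\pi)$ (with $\min\emptyset=+\infty$). Let $\hat\pi\in\arg\max_{\pi\in\Pi}J^-_{\mathrm{VS}}(\pi)$. Then with probability at least $1-\delta$, $$J(\pi_{\mathrm{cp}})-J(\hat\pi)\le c\,\frac{V_{\max}}{1-\gamma}\sqrt{\frac{C_{\pi_{\mathrm{cp}}}\log(|\mathcal{F}||\Pi|/\delta)}{n}}.$$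
   Context: MDP $(\mathcal{S},\mathcal{A},P,R,\gamma,d_0)$ with finite $\mathcal{S},\mathcal{A}$, deterministic reward $R:\mathcal{S}\times\mathcal{A}\to[0,R_{\max}]$, $\gamma\in[0,1)$, $V_{\max}=R_{\max}/(1-\gamma)$. For a policy $\pi$: $J(\pi)=\mathbb{E}_\pi[\sum_t\gamma^tr_t]$; $Q^\pi(s,a)=\mathbb{E}_\pi[\sum_t\gamma^tr_t\mid s_0=s,a_0=a]$; $f(s,\pi)=\sum_a\pi(a\mid s)f(s,a)$; $J_f(\pi)=\mathbb{E}_{s\sim d_0}[f(s,\pi)]$; $(\mathcal{T}^\pi f)(s,a)=R(s,a)+\gamma\mathbb{E}_{s'\sim P(\cdot\mid s,a)}[f(s',\pi)]$; $d^\pi(s,a)=(1-\gamma)\sum_{t\ge0}\gamma^t\Pr_\pi[s_t=s,a_t=a]$. Data distribution $d^D\in\Delta(\mathcal{S}\times\mathcal{A})$; $D$ is the distribution of $(s,a,r,s')$ with $(s,a)\sim d^D$, $r=R(s,a)$, $s'\sim P(\cdot\mid s,a)$. $\|d^\pi/d^D\|_\infty=\max_{s,a}d^\pi(s,a)/d^D(s,a)$ ($0/0=0$, nonzero$/0=\infty$). Empirical losses on dataset $\mathcal{D}$: $\widehat{\mathcal{L}}(f';f,\pi)=\frac{1}{|\mathcal{D}|}\sum_{(s,a,r,s')\in\mathcal{D}}(f'(s,a)-r-\gamma f(s',\pi))^2$ and $\widehat{\mathcal{E}}(f;\pi)=\max_{g\in\mathcal{F}}\big[\widehat{\mathcal{L}}(f;f,\pi)-\widehat{\mathcal{L}}(g;f,\pi)\big]$.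 Ties are broken arbitrarily. *)

theory Defs
  imports "HOL-Probability.Probability"
begin

text \<open>Finite MDP encoded on carriers S, A :: nat set (states/actions are naturals).\<close>

type_synonym policy = "nat \<Rightarrow> nat pmf"
type_synonym sample = "nat \<times> nat \<times> real \<times> nat"

definition step_sa :: "(nat \<Rightarrow> nat \<Rightarrow> nat pmf) \<Rightarrow> policy \<Rightarrow> nat \<times> nat \<Rightarrow> (nat \<times> nat) pmf" where
  "step_sa P pol = (\<lambda>(s, a). bind_pmf (P s a) (\<lambda>s'. map_pmf (\<lambda>a'. (s', a')) (pol s')))"

fun sa_dist :: "(nat \<Rightarrow> nat \<Rightarrow> nat pmf) \<Rightarrow> policy \<Rightarrow> (nat \<times> nat) pmf \<Rightarrow> nat \<Rightarrow> (nat \<times> nat) pmf" where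
  "sa_dist P pol mu 0 = mu"
| "sa_dist P pol mu (Suc t) = bind_pmf (sa_dist P pol mu t) (step_sa P pol)"

definition init_sa :: "nat pmf \<Rightarrow> policy \<Rightarrow> (nat \<times> nat) pmf" where
  "init_sa d0 pol = bind_pmf d0 (\<lambda>s. map_pmf (\<lambda>a. (s, a)) (pol s))"

definition Jret :: "(nat \<Rightarrow> nat \<Rightarrow> nat pmf) \<Rightarrow> (nat \<Rightarrow> nat \<Rightarrow> real) \<Rightarrow> real \<Rightarrow> nat pmf \<Rightarrow> policy \<Rightarrow> real" where
  "Jret P R \<gamma> d0 pol =
     (\<Sum>t. \<gamma> ^ t * measure_pmf.expectation (sa_dist P pol (init_sa d0 pol) t) (\<lambda>(s, a). R s a))"

definition Qfun :: "(nat \<Rightarrow> nat \<Rightarrow> nat pmf) \<Rightarrow> (nat \<Rightarrow> nat \<Rightarrow> real) \<Rightarrow> real \<Rightarrow> policy \<Rightarrow> nat \<Rightarrow> nat \<Rightarrow> real" where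
  "Qfun P R \<gamma> pol s a =
     (\<Sum>t. \<gamma> ^ t * measure_pmf.expectation (sa_dist P pol (return_pmf (s, a)) t) (\<lambda>(s', a'). R s' a'))"

definition occ :: "(nat \<Rightarrow> nat \<Rightarrow> nat pmf) \<Rightarrow> real \<Rightarrow> nat pmf \<Rightarrow> policy \<Rightarrow> nat \<times> nat \<Rightarrow> real" where
  "occ P \<gamma> d0 pol sa = (1 - \<gamma>) * (\<Sum>t. \<gamma> ^ t * pmf (sa_dist P pol (init_sa d0 pol) t) sa)"

definition conc :: "nat set \<Rightarrow> nat set \<Rightarrow> (nat \<Rightarrow> nat \<Rightarrow> nat pmf) \<Rightarrow> real \<Rightarrow> nat pmf \<Rightarrow> (nat \<times> nat) pmf \<Rightarrow> policy \<Rightarrow> ereal" where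
  "conc S A P \<gamma> d0 dD pol =
     Max ((\<lambda>sa. if pmf dD sa = 0 then (if occ P \<gamma> d0 pol sa = 0 then 0 else \<infinity>)
                 else ereal (occ P \<gamma> d0 pol sa / pmf dD sa)) ` (S \<times> A))"

definition fpol :: "nat set \<Rightarrow> (nat \<Rightarrow> nat \<Rightarrow> real) \<Rightarrow> policy \<Rightarrow> nat \<Rightarrow> real" where
  "fpol A f pol s = (\<Sum>a\<in>A. pmf (pol s) a * f s a)"

definition Jf :: "nat set \<Rightarrow> nat pmf \<Rightarrow> (nat \<Rightarrow> nat \<Rightarrow> real) \<Rightarrow> policy \<Rightarrow> real" where
  "Jf A d0 f pol = measure_pmf.expectation d0 (\<lambda>s. fpol A f pol s)"

definition bellman :: "nat set \<Rightarrow> (nat \<Rightarrow> nat \<Rightarrow> nat pmf) \<Rightarrow> (nat \<Rightarrow> nat \<Rightarrow> real) \<Rightarrow> real \<Rightarrow> policy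
    \<Rightarrow> (nat \<Rightarrow> nat \<Rightarrow> real) \<Rightarrow> nat \<Rightarrow> nat \<Rightarrow> real" where
  "bellman A P R \<gamma> pol f s a = R s a + \<gamma> * measure_pmf.expectation (P s a) (\<lambda>s'. fpol A f pol s')"

definition Dsample :: "(nat \<Rightarrow> nat \<Rightarrow> nat pmf) \<Rightarrow> (nat \<Rightarrow> nat \<Rightarrow> real) \<Rightarrow> (nat \<times> nat) pmf \<Rightarrow> sample pmf" where
  "Dsample P R dD = bind_pmf dD (\<lambda>(s, a). map_pmf (\<lambda>s'. (s, a, R s a, s')) (P s a))"

definition dataset_pmf :: "nat \<Rightarrow> sample pmf \<Rightarrow> (nat \<Rightarrow> sample) pmf" where
  "dataset_pmf n D = Pi_pmf {..<n} undefined (\<lambda>_. D)"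

definition Lhat :: "nat set \<Rightarrow> real \<Rightarrow> nat \<Rightarrow> (nat \<Rightarrow> sample) \<Rightarrow> (nat \<Rightarrow> nat \<Rightarrow> real)
    \<Rightarrow> (nat \<Rightarrow> nat \<Rightarrow> real) \<Rightarrow> policy \<Rightarrow> real" where
  "Lhat A \<gamma> n Ds f' f pol =
     (1 / real n) * (\<Sum>i<n. (case Ds i of (s, a, r, s') \<Rightarrow> (f' s a - r - \<gamma> * fpol A f pol s')\<^sup>2))"

definition Ehat :: "nat set \<Rightarrow> real \<Rightarrow> nat \<Rightarrow> (nat \<Rightarrow> sample) \<Rightarrow> (nat \<Rightarrow> nat \<Rightarrow> real) set
    \<Rightarrow> (nat \<Rightarrow> nat \<Rightarrow> real) \<Rightarrow> policy \<Rightarrow> real" where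
  "Ehat A \<gamma> n Ds F f pol = Max ((\<lambda>g. Lhat A \<gamma> n Ds f f pol - Lhat A \<gamma> n Ds g f pol) ` F)"

definition vspace :: "nat set \<Rightarrow> real \<Rightarrow> nat \<Rightarrow> (nat \<Rightarrow> sample) \<Rightarrow> (nat \<Rightarrow> nat \<Rightarrow> real) set
    \<Rightarrow> real \<Rightarrow> policy \<Rightarrow> (nat \<Rightarrow> nat \<Rightarrow> real) set" where
  "vspace A \<gamma> n Ds F eps pol = {f \<in> F. Ehat A \<gamma> n Ds F f pol \<le> eps}"

definition JVS :: "nat set \<Rightarrow> real \<Rightarrow> nat pmf \<Rightarrow> nat \<Rightarrow> (nat \<Rightarrow> sample) \<Rightarrow> (nat \<Rightarrow> nat \<Rightarrow> real) set
    \<Rightarrow> real \<Rightarrow> policy \<Rightarrow> ereal" where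
  "JVS A \<gamma> d0 n Ds F eps pol =
     (let V = vspace A \<gamma> n Ds F eps pol in
      if V = {} then \<infinity> else ereal (Min ((\<lambda>f. Jf A d0 f pol) ` V)))"

end

theory Submission
  imports Defs
begin

lemma exp_le_quad:
  fixes x :: real assumes "x \<le> 1" shows "exp x \<le> 1 + x + x\<^sup>2"
proof (cases "0 \<le> x")
  case True thus ?thesis using exp_bound assms by simp
next
  case False
  have h: "1 + (-x) + (-x)\<^sup>2/2 \<le> exp (-x)" using exp_lower_Taylor_quadratic[of "-x"] False by simp
  have "0 \<le> (-x)\<^sup>2/2" by simp
  hence pos: "0 < 1 + (-x) + (-x)\<^sup>2/2" using False by linarith
  have "exp x = 1 / exp (-x)" by (simp add: exp_minus field_simps)
  also have "\<dots> \<le> 1 / (1 + (-x) + (-x)\<^sup>2/2)" using h pos by (intro divide_left_mono) auto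
  also have "\<dots> \<le> 1 + x + x\<^sup>2"
  proof -
    have eq: "(1 + (-x) + (-x)\<^sup>2/2) * (1 + x + x\<^sup>2) = 1 + x\<^sup>2/2 + (-x) * x\<^sup>2/2 + x\<^sup>2 * x\<^sup>2/2"
      by (simp add: field_simps power2_eq_square)
    have "0 \<le> (-x) * x\<^sup>2" using False by (intro mult_nonneg_nonneg) auto
    hence "0 \<le> (-x) * x\<^sup>2/2" by simp
    moreover have "0 \<le> x\<^sup>2 * x\<^sup>2/2" by simp
    moreover have "0 \<le> x\<^sup>2/2" by simp
    ultimately have "1 \<le> (1 + (-x) + (-x)\<^sup>2/2) * (1 + x + x\<^sup>2)" unfolding eq by linarith
    thus ?thesis using pos by (simp add: divide_le_eq mult.commute)
  qed
  finally show ?thesis .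
qed

lemma E_sum:
  fixes g :: "'a \<Rightarrow> real"
  assumes "finite X" "set_pmf p \<subseteq> X"
  shows "measure_pmf.expectation p g = (\<Sum>x\<in>X. pmf p x * g x)"
  using assms by (subst integral_measure_pmf[of X]) auto

lemma E_bnd:
  fixes g :: "'a \<Rightarrow> real"
  assumes "finite X" "set_pmf p \<subseteq> X" "\<And>x. x \<in> X \<Longrightarrow> \<bar>g x\<bar> \<le> M"
  shows "\<bar>measure_pmf.expectation p g\<bar> \<le> M"
proof -
  have "\<bar>measure_pmf.expectation p g\<bar> = \<bar>\<Sum>x\<in>X. pmf p x * g x\<bar>" using E_sum[OF assms(1,2)] by simp
  also have "\<dots> \<le> (\<Sum>x\<in>X. \<bar>pmf p x * g x\<bar>)" by (rule sum_abs)
  also have "\<dots> \<le> (\<Sum>x\<in>X. pmf p x * M)"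
    by (intro sum_mono) (simp add: abs_mult assms(3) mult_left_mono)
  also have "\<dots> = M" using sum_pmf_eq_1[OF assms(1,2)] by (simp add: sum_distrib_right[symmetric])
  finally show ?thesis .
qed

lemma fin_bnd:
  fixes g :: "'a \<Rightarrow> real"
  assumes "finite X" shows "\<exists>M. \<forall>x\<in>X. \<bar>g x\<bar> \<le> M"
  using assms by (intro exI[of _ "\<Sum>x\<in>X. \<bar>g x\<bar>"]) (auto intro: member_le_sum)

lemma summable_geo_bnd:
  fixes a :: "nat \<Rightarrow> real"
  assumes "0 \<le> \<gamma>" "\<gamma> < 1" "\<And>t. \<bar>a t\<bar> \<le> M"
  shows "summable (\<lambda>t. \<gamma>^t * a t)"
proof (rule summable_comparison_test')
  show "summable (\<lambda>t. M * \<gamma>^t)" using assms by (intro summable_mult summable_geometric) auto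
  fix t show "norm (\<gamma>^t * a t) \<le> M * \<gamma>^t"
    using mult_right_mono[OF assms(3)[of t], of "\<gamma>^t"] assms by (simp add: abs_mult mult.commute)
qed

lemma sa_shift: "sa_dist P pol mu (Suc t) = sa_dist P pol (bind_pmf mu (step_sa P pol)) t"
  by (induction t) auto

lemma sa_markov: "sa_dist P pol mu t = bind_pmf mu (\<lambda>x. sa_dist P pol (return_pmf x) t)"
  by (induction t) (auto simp: bind_return_pmf' bind_assoc_pmf)

locale mdp =
  fixes S A :: "nat set" and P :: "nat \<Rightarrow> nat \<Rightarrow> nat pmf" and R :: "nat \<Rightarrow> nat \<Rightarrow> real" and \<gamma> :: real
  assumes finS: "finite S" and finA: "finite A"
    and Pcl: "\<And>s a. s \<in> S \<Longrightarrow> a \<in> A \<Longrightarrow> set_pmf (P s a) \<subseteq> S"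
    and g0: "0 \<le> \<gamma>" and g1: "\<gamma> < 1"
begin

definition okpol :: "policy \<Rightarrow> bool" where "okpol pol \<longleftrightarrow> (\<forall>s\<in>S. set_pmf (pol s) \<subseteq> A)"

lemma finSA: "finite (S \<times> A)" using finS finA by simp

lemma step_supp:
  assumes "okpol pol" "x \<in> S \<times> A" shows "set_pmf (step_sa P pol x) \<subseteq> S \<times> A"
  using assms Pcl unfolding okpol_def step_sa_def by (cases x) (fastforce simp: set_bind_pmf)

lemma sa_supp:
  assumes "okpol pol" "set_pmf mu \<subseteq> S \<times> A" shows "set_pmf (sa_dist P pol mu t) \<subseteq> S \<times> A"
proof (induction t)
  case (Suc t)
  show ?case
  proof
    fix y assume "y \<in> set_pmf (sa_dist P pol mu (Suc t))"
    then obtain x where x: "x \<in> set_pmf (sa_dist P pol mu t)" "y \<in> set_pmf (step_sa P pol x)"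
      by (auto simp: set_bind_pmf)
    have "x \<in> S \<times> A" using x(1) Suc by blast
    thus "y \<in> S \<times> A" using step_supp[OF assms(1)] x(2) by blast
  qed
qed (use assms in simp)

lemma init_supp:
  assumes "okpol pol" "set_pmf d0 \<subseteq> S" shows "set_pmf (init_sa d0 pol) \<subseteq> S \<times> A"
  using assms unfolding okpol_def init_sa_def by (fastforce simp: set_bind_pmf)

lemma E_bind:
  fixes g :: "'b \<Rightarrow> real"
  assumes "finite X" "set_pmf p \<subseteq> X" "\<And>x. x \<in> X \<Longrightarrow> set_pmf (N x) \<subseteq> Y" "finite Y"
  shows "measure_pmf.expectation (bind_pmf p N) g = (\<Sum>x\<in>X. pmf p x * measure_pmf.expectation (N x) g)"
  using assms by (subst pmf_expectation_bind[of X]) (auto intro: finite_subset)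

lemma E_pair:
  assumes "okpol pol" "set_pmf p \<subseteq> S"
  shows "measure_pmf.expectation (bind_pmf p (\<lambda>s'. map_pmf (\<lambda>a'. (s', a')) (pol s'))) (\<lambda>(s,a). f s a)
       = measure_pmf.expectation p (fpol A f pol)"
proof -
  have "measure_pmf.expectation (bind_pmf p (\<lambda>s'. map_pmf (\<lambda>a'. (s', a')) (pol s'))) (\<lambda>(s,a). f s a)
      = (\<Sum>s'\<in>S. pmf p s' * measure_pmf.expectation (map_pmf (\<lambda>a'. (s', a')) (pol s')) (\<lambda>(s,a). f s a))"
    using assms finS finSA unfolding okpol_def by (intro E_bind[where Y="S \<times> A"]) auto
  also have "\<dots> = (\<Sum>s'\<in>S. pmf p s' * fpol A f pol s')"
  proof (intro sum.cong refl)
    fix s' assume "s' \<in> S"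
    hence "set_pmf (pol s') \<subseteq> A" using assms(1) unfolding okpol_def by auto
    thus "pmf p s' * measure_pmf.expectation (map_pmf (\<lambda>a'. (s', a')) (pol s')) (\<lambda>(s,a). f s a) = pmf p s' * fpol A f pol s'"
      unfolding fpol_def using finA by (simp add: E_sum[of A])
  qed
  also have "\<dots> = measure_pmf.expectation p (fpol A f pol)" using assms finS by (simp add: E_sum[of S])
  finally show ?thesis .
qed

lemma step_E:
  assumes "okpol pol" "s \<in> S" "a \<in> A"
  shows "measure_pmf.expectation (step_sa P pol (s,a)) (\<lambda>(s,a). f s a) = measure_pmf.expectation (P s a) (fpol A f pol)"
  unfolding step_sa_def using E_pair[OF assms(1) Pcl[OF assms(2,3)]] by simp

lemma init_E:
  assumes "okpol pol" "set_pmf d0 \<subseteq> S"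
  shows "measure_pmf.expectation (init_sa d0 pol) (\<lambda>(s,a). f s a) = Jf A d0 f pol"
  unfolding init_sa_def Jf_def using E_pair[OF assms] by simp

end


context mdp begin

lemma Qfun_bellman:
  assumes "okpol pol" "s \<in> S" "a \<in> A"
  shows "Qfun P R \<gamma> pol s a = bellman A P R \<gamma> pol (Qfun P R \<gamma> pol) s a"
proof -
  define Rc where "Rc = (\<lambda>(s'::nat, a'::nat). R s' a')"
  define e where "e y t = measure_pmf.expectation (sa_dist P pol (return_pmf y) t) Rc" for y t
  define Qc where "Qc = (\<lambda>(s'::nat, a'::nat). Qfun P R \<gamma> pol s' a')"
  obtain MR where MR: "\<forall>x\<in>S\<times>A. \<bar>Rc x\<bar> \<le> MR" using fin_bnd[OF finSA] by blast
  have ebnd: "\<bar>e y t\<bar> \<le> MR" if "y \<in> S\<times>A" for y t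
    unfolding e_def using that MR by (intro E_bnd[OF finSA] sa_supp[OF assms(1)]) auto
  have summ: "summable (\<lambda>t. \<gamma>^t * e y t)" if "y \<in> S\<times>A" for y
    using g0 g1 ebnd[OF that] by (rule summable_geo_bnd)
  have Qe: "Qc y = (\<Sum>t. \<gamma>^t * e y t)" for y
    unfolding Qc_def Qfun_def e_def Rc_def by (cases y) simp
  define x where "x = (s,a)"
  have x: "x \<in> S\<times>A" using assms x_def by simp
  have stepS: "set_pmf (step_sa P pol x) \<subseteq> S\<times>A" using step_supp[OF assms(1) x] .
  have esuc: "e x (Suc t) = (\<Sum>y\<in>S\<times>A. pmf (step_sa P pol x) y * e y t)" for t
  proof -
    have "sa_dist P pol (return_pmf x) (Suc t) = sa_dist P pol (step_sa P pol x) t"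
      using sa_shift[of P pol "return_pmf x" t] unfolding bind_return_pmf .
    also have "\<dots> = bind_pmf (step_sa P pol x) (\<lambda>y. sa_dist P pol (return_pmf y) t)" by (rule sa_markov)
    finally have "e x (Suc t) = measure_pmf.expectation (bind_pmf (step_sa P pol x) (\<lambda>y. sa_dist P pol (return_pmf y) t)) Rc"
      unfolding e_def by simp
    also have "\<dots> = (\<Sum>y\<in>S\<times>A. pmf (step_sa P pol x) y * e y t)"
      unfolding e_def using stepS finSA sa_supp[OF assms(1)] by (intro E_bind[where Y="S\<times>A"]) auto
    finally show ?thesis .
  qed
  have "Qfun P R \<gamma> pol s a = Qc x" unfolding Qc_def x_def by simp
  also have "\<dots> = (\<Sum>t. \<gamma>^t * e x t)" by (rule Qe)
  also have "\<dots> = (\<Sum>t. \<gamma>^(Suc t) * e x (Suc t)) + \<gamma>^0 * e x 0"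
    using suminf_split_head[OF summ[OF x]] by simp
  also have "\<gamma>^0 * e x 0 = R s a" unfolding e_def Rc_def x_def by simp
  also have "(\<Sum>t. \<gamma>^(Suc t) * e x (Suc t)) = (\<Sum>t. \<gamma> * (\<Sum>y\<in>S\<times>A. pmf (step_sa P pol x) y * (\<gamma>^t * e y t)))"
    by (simp add: esuc sum_distrib_left algebra_simps)
  also have "\<dots> = \<gamma> * (\<Sum>t. \<Sum>y\<in>S\<times>A. pmf (step_sa P pol x) y * (\<gamma>^t * e y t))"
    by (intro suminf_mult summable_sum summable_mult summ) auto
  also have "(\<Sum>t. \<Sum>y\<in>S\<times>A. pmf (step_sa P pol x) y * (\<gamma>^t * e y t))
      = (\<Sum>y\<in>S\<times>A. \<Sum>t. pmf (step_sa P pol x) y * (\<gamma>^t * e y t))"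
    by (intro suminf_sum summable_mult summ) auto
  also have "\<dots> = (\<Sum>y\<in>S\<times>A. pmf (step_sa P pol x) y * Qc y)"
    by (intro sum.cong refl) (simp add: Qe suminf_mult summ)
  also have "\<dots> = measure_pmf.expectation (step_sa P pol x) Qc"
    using E_sum[OF finSA stepS] by simp
  also have "\<dots> = measure_pmf.expectation (P s a) (fpol A (Qfun P R \<gamma> pol) pol)"
    unfolding Qc_def x_def using step_E[OF assms] by simp
  finally show ?thesis unfolding bellman_def by simp
qed

lemma Jret_Q:
  assumes "okpol pol" "set_pmf d0 \<subseteq> S"
  shows "Jret P R \<gamma> d0 pol = Jf A d0 (Qfun P R \<gamma> pol) pol"
proof -
  define Rc where "Rc = (\<lambda>(s'::nat, a'::nat). R s' a')"
  define e where "e y t = measure_pmf.expectation (sa_dist P pol (return_pmf y) t) Rc" for y t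
  define Qc where "Qc = (\<lambda>(s'::nat, a'::nat). Qfun P R \<gamma> pol s' a')"
  obtain MR where MR: "\<forall>x\<in>S\<times>A. \<bar>Rc x\<bar> \<le> MR" using fin_bnd[OF finSA] by blast
  have ebnd: "\<bar>e y t\<bar> \<le> MR" if "y \<in> S\<times>A" for y t
    unfolding e_def using that MR by (intro E_bnd[OF finSA] sa_supp[OF assms(1)]) auto
  have summ: "summable (\<lambda>t. \<gamma>^t * e y t)" if "y \<in> S\<times>A" for y
    using g0 g1 ebnd[OF that] by (rule summable_geo_bnd)
  have Qe: "Qc y = (\<Sum>t. \<gamma>^t * e y t)" for y
    unfolding Qc_def Qfun_def e_def Rc_def by (cases y) simp
  define mu where "mu = init_sa d0 pol"
  have muS: "set_pmf mu \<subseteq> S\<times>A" unfolding mu_def by (rule init_supp[OF assms])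
  have et: "measure_pmf.expectation (sa_dist P pol mu t) Rc = (\<Sum>y\<in>S\<times>A. pmf mu y * e y t)" for t
  proof -
    have "measure_pmf.expectation (sa_dist P pol mu t) Rc
        = measure_pmf.expectation (bind_pmf mu (\<lambda>y. sa_dist P pol (return_pmf y) t)) Rc"
      by (subst sa_markov) (rule refl)
    also have "\<dots> = (\<Sum>y\<in>S\<times>A. pmf mu y * e y t)"
      unfolding e_def using muS finSA sa_supp[OF assms(1)] by (intro E_bind[where Y="S\<times>A"]) auto
    finally show ?thesis .
  qed
  have "Jret P R \<gamma> d0 pol = (\<Sum>t. \<gamma>^t * measure_pmf.expectation (sa_dist P pol mu t) Rc)"
    unfolding Jret_def mu_def Rc_def by simp
  also have "\<dots> = (\<Sum>t. \<Sum>y\<in>S\<times>A. pmf mu y * (\<gamma>^t * e y t))"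
    by (simp add: et sum_distrib_left algebra_simps)
  also have "\<dots> = (\<Sum>y\<in>S\<times>A. \<Sum>t. pmf mu y * (\<gamma>^t * e y t))"
    by (intro suminf_sum summable_mult summ) auto
  also have "\<dots> = (\<Sum>y\<in>S\<times>A. pmf mu y * Qc y)"
    by (intro sum.cong refl) (simp add: Qe suminf_mult summ)
  also have "\<dots> = measure_pmf.expectation mu Qc"
    using E_sum[OF finSA muS] by simp
  also have "\<dots> = Jf A d0 (Qfun P R \<gamma> pol) pol"
    unfolding Qc_def mu_def using init_E[OF assms] by simp
  finally show ?thesis .
qed

lemma perf_diff:
  assumes "okpol pol" "set_pmf d0 \<subseteq> S"
  shows "Jret P R \<gamma> d0 pol - Jf A d0 f pol =
    (\<Sum>t. \<gamma>^t * measure_pmf.expectation (sa_dist P pol (init_sa d0 pol) t)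
                   (\<lambda>(s,a). bellman A P R \<gamma> pol f s a - f s a))"
proof -
  define mu where "mu t = sa_dist P pol (init_sa d0 pol) t" for t
  have muS: "set_pmf (mu t) \<subseteq> S\<times>A" for t
    unfolding mu_def by (intro sa_supp init_supp assms)
  define Rc where "Rc = (\<lambda>(s'::nat, a'::nat). R s' a')"
  define fc where "fc = (\<lambda>(s'::nat, a'::nat). f s' a')"
  define G where "G = (\<lambda>(s'::nat, a'::nat). measure_pmf.expectation (P s' a') (fpol A f pol))"
  define r where "r t = measure_pmf.expectation (mu t) Rc" for t
  define b where "b t = measure_pmf.expectation (mu t) fc" for t
  obtain MR where MR: "\<forall>x\<in>S\<times>A. \<bar>Rc x\<bar> \<le> MR" using fin_bnd[OF finSA] by blast
  obtain Mf where Mf: "\<forall>x\<in>S\<times>A. \<bar>fc x\<bar> \<le> Mf" using fin_bnd[OF finSA] by blast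
  have rb: "\<bar>r t\<bar> \<le> MR" for t unfolding r_def using MR by (intro E_bnd[OF finSA muS]) auto
  have bb: "\<bar>b t\<bar> \<le> Mf" for t unfolding b_def using Mf by (intro E_bnd[OF finSA muS]) auto
  have sr: "summable (\<lambda>t. \<gamma>^t * r t)" using g0 g1 rb by (rule summable_geo_bnd)
  have sb: "summable (\<lambda>t. \<gamma>^t * b t)" using g0 g1 bb by (rule summable_geo_bnd)
  have sb1: "summable (\<lambda>t. \<gamma>^(Suc t) * b (Suc t))" using sb by (subst summable_Suc_iff)
  have bsuc: "b (Suc t) = (\<Sum>x\<in>S\<times>A. pmf (mu t) x * G x)" for t
  proof -
    have "b (Suc t) = measure_pmf.expectation (bind_pmf (mu t) (step_sa P pol)) fc"
      unfolding b_def mu_def by simp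
    also have "\<dots> = (\<Sum>x\<in>S\<times>A. pmf (mu t) x * measure_pmf.expectation (step_sa P pol x) fc)"
      using muS finSA step_supp[OF assms(1)] by (intro E_bind[where Y="S\<times>A"]) auto
    also have "\<dots> = (\<Sum>x\<in>S\<times>A. pmf (mu t) x * G x)"
    proof (intro sum.cong refl)
      fix x assume "x \<in> S\<times>A"
      thus "pmf (mu t) x * measure_pmf.expectation (step_sa P pol x) fc = pmf (mu t) x * G x"
        unfolding fc_def G_def using step_E[OF assms(1)] by (cases x) auto
    qed
    finally show ?thesis .
  qed
  have key: "measure_pmf.expectation (mu t) (\<lambda>(s,a). bellman A P R \<gamma> pol f s a - f s a)
      = r t + \<gamma> * b (Suc t) - b t" for t
  proof -
    have "measure_pmf.expectation (mu t) (\<lambda>(s,a). bellman A P R \<gamma> pol f s a - f s a)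
       = (\<Sum>x\<in>S\<times>A. pmf (mu t) x * (Rc x + \<gamma> * G x - fc x))"
      using E_sum[OF finSA muS] unfolding bellman_def Rc_def G_def fc_def
      by (simp add: case_prod_beta)
    also have "\<dots> = (\<Sum>x\<in>S\<times>A. pmf (mu t) x * Rc x) + \<gamma> * (\<Sum>x\<in>S\<times>A. pmf (mu t) x * G x)
                    - (\<Sum>x\<in>S\<times>A. pmf (mu t) x * fc x)"
      by (simp add: algebra_simps sum.distrib sum_subtractf sum_distrib_left)
    also have "\<dots> = r t + \<gamma> * b (Suc t) - b t"
      using E_sum[OF finSA muS] by (simp add: bsuc r_def b_def[of t])
    finally show ?thesis .
  qed
  have "(\<Sum>t. \<gamma>^t * measure_pmf.expectation (mu t) (\<lambda>(s,a). bellman A P R \<gamma> pol f s a - f s a))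
      = (\<Sum>t. \<gamma>^t * r t + \<gamma>^(Suc t) * b (Suc t) - \<gamma>^t * b t)"
    by (simp add: key algebra_simps)
  also have "\<dots> = (\<Sum>t. \<gamma>^t * r t) + (\<Sum>t. \<gamma>^(Suc t) * b (Suc t)) - (\<Sum>t. \<gamma>^t * b t)"
    using sr sb sb1 by (simp add: suminf_add suminf_diff summable_add)
  also have "(\<Sum>t. \<gamma>^(Suc t) * b (Suc t)) = (\<Sum>t. \<gamma>^t * b t) - b 0"
    using suminf_split_head[OF sb] by simp
  also have "(\<Sum>t. \<gamma>^t * r t) = Jret P R \<gamma> d0 pol"
    unfolding Jret_def r_def mu_def Rc_def by simp
  also have "b 0 = Jf A d0 f pol"
    unfolding b_def mu_def fc_def using init_E[OF assms] by simp
  finally show ?thesis unfolding mu_def by simp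
qed

lemma occ_formula:
  assumes "okpol pol" "set_pmf d0 \<subseteq> S"
  shows "(\<Sum>t. \<gamma>^t * measure_pmf.expectation (sa_dist P pol (init_sa d0 pol) t) g)
       = (\<Sum>x\<in>S\<times>A. occ P \<gamma> d0 pol x * g x) / (1 - \<gamma>)"
proof -
  define mu where "mu t = sa_dist P pol (init_sa d0 pol) t" for t
  have muS: "set_pmf (mu t) \<subseteq> S\<times>A" for t
    unfolding mu_def by (intro sa_supp init_supp assms)
  have sp: "summable (\<lambda>t. \<gamma>^t * pmf (mu t) x)" for x
    using g0 g1 by (rule summable_geo_bnd[where M=1]) (simp add: pmf_le_1)
  have "(\<Sum>t. \<gamma>^t * measure_pmf.expectation (mu t) g) = (\<Sum>t. \<Sum>x\<in>S\<times>A. g x * (\<gamma>^t * pmf (mu t) x))"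
    using E_sum[OF finSA muS] by (simp add: sum_distrib_left algebra_simps)
  also have "\<dots> = (\<Sum>x\<in>S\<times>A. \<Sum>t. g x * (\<gamma>^t * pmf (mu t) x))"
    by (intro suminf_sum summable_mult sp)
  also have "\<dots> = (\<Sum>x\<in>S\<times>A. g x * (\<Sum>t. \<gamma>^t * pmf (mu t) x))"
    by (intro sum.cong refl suminf_mult sp)
  also have "\<dots> = (\<Sum>x\<in>S\<times>A. occ P \<gamma> d0 pol x * g x) / (1 - \<gamma>)"
    unfolding occ_def mu_def using g1 by (simp add: sum_divide_distrib mult.commute)
  finally show ?thesis unfolding mu_def .
qed

lemma occ_nonneg: "0 \<le> occ P \<gamma> d0 pol x"
proof -
  have "summable (\<lambda>t. \<gamma>^t * pmf (sa_dist P pol (init_sa d0 pol) t) x)"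
    using g0 g1 by (rule summable_geo_bnd[where M=1]) (simp add: pmf_le_1)
  hence "0 \<le> (\<Sum>t. \<gamma>^t * pmf (sa_dist P pol (init_sa d0 pol) t) x)"
    by (intro suminf_nonneg) (auto intro!: mult_nonneg_nonneg zero_le_power g0)
  thus ?thesis unfolding occ_def using g1 by simp
qed

lemma occ_total:
  assumes "okpol pol" "set_pmf d0 \<subseteq> S"
  shows "(\<Sum>x\<in>S\<times>A. occ P \<gamma> d0 pol x) = 1"
proof -
  have muS: "set_pmf (sa_dist P pol (init_sa d0 pol) t) \<subseteq> S\<times>A" for t
    by (intro sa_supp init_supp assms)
  have "(\<Sum>t. \<gamma>^t * measure_pmf.expectation (sa_dist P pol (init_sa d0 pol) t) (\<lambda>_. 1::real)) = (\<Sum>t. \<gamma>^t)"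
    using E_sum[OF finSA muS] sum_pmf_eq_1[OF finSA muS] by simp
  also have "\<dots> = 1 / (1 - \<gamma>)" using g0 g1 by (simp add: suminf_geometric)
  finally have "(\<Sum>x\<in>S\<times>A. occ P \<gamma> d0 pol x) / (1 - \<gamma>) = 1 / (1 - \<gamma>)"
    using occ_formula[OF assms, of "\<lambda>_. 1"] by simp
  thus ?thesis using g1 by (simp add: field_simps)
qed

end


context mdp begin

lemma conc_facts:
  assumes "conc S A P \<gamma> d0 dD pol < \<infinity>" "x0 \<in> S \<times> A"
  shows "0 \<le> real_of_ereal (conc S A P \<gamma> d0 dD pol)"
    and "\<And>x. x \<in> S \<times> A \<Longrightarrow> occ P \<gamma> d0 pol x \<le> real_of_ereal (conc S A P \<gamma> d0 dD pol) * pmf dD x"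
proof -
  define v where "v = (\<lambda>sa. if pmf dD sa = 0 then (if occ P \<gamma> d0 pol sa = 0 then 0 else \<infinity>)
                 else ereal (occ P \<gamma> d0 pol sa / pmf dD sa))"
  have cv: "conc S A P \<gamma> d0 dD pol = Max (v ` (S \<times> A))" unfolding conc_def v_def by simp
  have vle: "v x \<le> conc S A P \<gamma> d0 dD pol" if "x \<in> S \<times> A" for x
    unfolding cv using finSA that by (intro Max_ge) auto
  have v0: "0 \<le> v x" for x unfolding v_def using occ_nonneg[of d0 pol x] by auto
  have c0: "0 \<le> conc S A P \<gamma> d0 dD pol" using v0[of x0] vle[OF assms(2)] by (rule order.trans)
  obtain C where C: "conc S A P \<gamma> d0 dD pol = ereal C" using assms(1) c0
    by (cases "conc S A P \<gamma> d0 dD pol") auto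
  show "0 \<le> real_of_ereal (conc S A P \<gamma> d0 dD pol)" using c0 C by simp
  fix x assume x: "x \<in> S \<times> A"
  show "occ P \<gamma> d0 pol x \<le> real_of_ereal (conc S A P \<gamma> d0 dD pol) * pmf dD x"
  proof (cases "pmf dD x = 0")
    case True
    have "occ P \<gamma> d0 pol x = 0"
    proof (rule ccontr)
      assume "occ P \<gamma> d0 pol x \<noteq> 0"
      hence "v x = \<infinity>" using True unfolding v_def by simp
      thus False using vle[OF x] C by simp
    qed
    thus ?thesis using True by simp
  next
    case False
    hence "ereal (occ P \<gamma> d0 pol x / pmf dD x) \<le> ereal C" using vle[OF x] C unfolding v_def by simp
    hence "occ P \<gamma> d0 pol x / pmf dD x \<le> C" by simp
    moreover have "0 < pmf dD x" using False pmf_nonneg[of dD x] by linarith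
    ultimately show ?thesis using C by (simp add: divide_le_eq mult.commute)
  qed
qed

lemma amgm_sum:
  fixes w d dd :: "'a \<Rightarrow> real"
  assumes "finite X" "\<And>x. x \<in> X \<Longrightarrow> 0 \<le> w x" "(\<Sum>x\<in>X. w x) = 1"
    "\<And>x. x \<in> X \<Longrightarrow> w x \<le> C * dd x" "0 \<le> C" "(\<Sum>x\<in>X. dd x * (d x)\<^sup>2) \<le> \<beta>" "0 < \<beta>"
  shows "(\<Sum>x\<in>X. w x * d x) \<le> sqrt (C * \<beta>)"
proof (cases "C = 0")
  case True
  have "w x = 0" if "x \<in> X" for x using assms(2,4)[OF that] True by simp
  thus ?thesis using True by simp
next
  case False
  hence Cp: "0 < C" using assms(5) by simp
  define \<tau> where "\<tau> = sqrt (C * \<beta>)"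
  have tp: "0 < \<tau>" unfolding \<tau>_def using Cp assms(7) by simp
  have tsq: "\<tau> * \<tau> = C * \<beta>" unfolding \<tau>_def using Cp assms(7) by simp
  have pt: "d x \<le> \<tau>/2 + (d x)\<^sup>2 / (2*\<tau>)" for x
  proof -
    have "0 \<le> (d x - \<tau>)\<^sup>2" by simp
    hence "2 * \<tau> * d x \<le> \<tau> * \<tau> + (d x)\<^sup>2" by (simp add: power2_eq_square algebra_simps)
    thus ?thesis using tp by (simp add: field_simps power2_eq_square)
  qed
  have "(\<Sum>x\<in>X. w x * d x) \<le> (\<Sum>x\<in>X. w x * (\<tau>/2) + (w x * (d x)\<^sup>2) / (2*\<tau>))"
  proof (intro sum_mono)
    fix x assume "x \<in> X"
    hence "w x * d x \<le> w x * (\<tau>/2 + (d x)\<^sup>2 / (2*\<tau>))" using assms(2) pt by (intro mult_left_mono) auto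
    thus "w x * d x \<le> w x * (\<tau>/2) + (w x * (d x)\<^sup>2) / (2*\<tau>)" by (simp add: distrib_left)
  qed
  also have "\<dots> = \<tau>/2 + (\<Sum>x\<in>X. w x * (d x)\<^sup>2) / (2*\<tau>)"
    by (simp add: sum.distrib sum_divide_distrib[symmetric] sum_distrib_right[symmetric] assms(3))
  also have "(\<Sum>x\<in>X. w x * (d x)\<^sup>2) \<le> (\<Sum>x\<in>X. C * (dd x * (d x)\<^sup>2))"
    by (intro sum_mono) (use assms(4) in \<open>auto simp: mult.assoc[symmetric] intro: mult_right_mono\<close>)
  also have "\<dots> = C * (\<Sum>x\<in>X. dd x * (d x)\<^sup>2)" by (simp add: sum_distrib_left)
  also have "\<dots> \<le> C * \<beta>" using assms(6) Cp by simp
  finally have "(\<Sum>x\<in>X. w x * d x) \<le> \<tau>/2 + C * \<beta> / (2*\<tau>)" using tp by (simp add: divide_right_mono)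
  also have "\<dots> = \<tau>" using tsq tp by (simp add: field_simps)
  finally show ?thesis unfolding \<tau>_def .
qed

lemma pd_bound:
  assumes "okpol pol" "set_pmf d0 \<subseteq> S" "conc S A P \<gamma> d0 dD pol < \<infinity>" "0 < \<beta>" "x0 \<in> S \<times> A"
    and hh: "\<forall>s\<in>S. \<forall>a\<in>A. h s a = bellman A P R \<gamma> pol f s a"
    and nrm: "(\<Sum>x\<in>S\<times>A. pmf dD x * (h (fst x) (snd x) - f (fst x) (snd x))\<^sup>2) \<le> \<beta>"
  shows "Jret P R \<gamma> d0 pol - Jf A d0 f pol \<le> sqrt (real_of_ereal (conc S A P \<gamma> d0 dD pol) * \<beta>) / (1 - \<gamma>)"
proof -
  define d where "d = (\<lambda>(s,a). bellman A P R \<gamma> pol f s a - f s a)"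
  have "Jret P R \<gamma> d0 pol - Jf A d0 f pol = (\<Sum>x\<in>S\<times>A. occ P \<gamma> d0 pol x * d x) / (1 - \<gamma>)"
    unfolding perf_diff[OF assms(1,2)] d_def by (rule occ_formula[OF assms(1,2)])
  also have "(\<Sum>x\<in>S\<times>A. occ P \<gamma> d0 pol x * d x) \<le> sqrt (real_of_ereal (conc S A P \<gamma> d0 dD pol) * \<beta>)"
  proof (rule amgm_sum[OF finSA occ_nonneg occ_total[OF assms(1,2)] conc_facts(2)[OF assms(3,5)] conc_facts(1)[OF assms(3,5)] _ assms(4)])
    have "(\<Sum>x\<in>S\<times>A. pmf dD x * (d x)\<^sup>2) = (\<Sum>x\<in>S\<times>A. pmf dD x * (h (fst x) (snd x) - f (fst x) (snd x))\<^sup>2)"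
      by (intro sum.cong refl) (use hh in \<open>auto simp: d_def\<close>)
    thus "(\<Sum>x\<in>S\<times>A. pmf dD x * (d x)\<^sup>2) \<le> \<beta>" using nrm by simp
  qed
  finally show ?thesis using g1 by (simp add: divide_right_mono)
qed

end


lemma chernoff:
  fixes Dd :: "'a pmf" and \<phi> :: "'a \<Rightarrow> real"
  assumes fin: "finite (set_pmf Dd)"
    and bnd: "\<And>x. x \<in> set_pmf Dd \<Longrightarrow> \<bar>\<phi> x\<bar> \<le> B"
    and mu: "measure_pmf.expectation Dd \<phi> = \<mu>" "0 \<le> \<mu>"
    and var: "measure_pmf.expectation Dd (\<lambda>x. (\<phi> x)\<^sup>2) \<le> K * \<mu>"
    and lam: "0 < lm" "lm * B \<le> 1" "lm * K \<le> 1/2" and dp: "0 < \<delta>'"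
  shows "measure_pmf.prob (Pi_pmf {..<n} dflt (\<lambda>_. Dd))
           {Ds. (\<Sum>i<n. \<phi> (Ds i)) < real n * \<mu> / 2 - ln (1/\<delta>') / lm} \<le> \<delta>'"
proof -
  define Q where "Q = Pi_pmf {..<n} dflt (\<lambda>_. Dd)"
  define a where "a = real n * \<mu> / 2 - ln (1/\<delta>') / lm"
  define Y where "Y = (\<lambda>Ds. \<Prod>i\<in>{..<n}. exp (- lm * \<phi> (Ds i)))"
  define c where "c = exp (- lm * a)"
  define m where "m = measure_pmf.expectation Dd (\<lambda>v. exp (- lm * \<phi> v))"
  have cpos: "0 < c" unfolding c_def by simp
  have Yeq: "Y Ds = exp (- lm * (\<Sum>i<n. \<phi> (Ds i)))" for Ds
    unfolding Y_def by (simp add: exp_sum sum_distrib_left)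
  have sub: "{Ds. (\<Sum>i<n. \<phi> (Ds i)) < a} \<subseteq> {Ds \<in> space (measure_pmf Q). c \<le> Y Ds}"
    unfolding c_def Yeq using lam(1) by auto
  have intY: "integrable (measure_pmf Q) Y"
    unfolding Q_def Y_def using fin by (intro integrable_prod_Pi_pmf integrable_measure_pmf_finite) auto
  have EY: "measure_pmf.expectation Q Y = m ^ n"
    unfolding Q_def Y_def m_def using fin by (subst expectation_prod_Pi_pmf) (auto intro: integrable_measure_pmf_finite)
  have m0: "0 \<le> m" unfolding m_def by (intro integral_nonneg_AE) auto
  have "m = (\<Sum>x\<in>set_pmf Dd. pmf Dd x * exp (- lm * \<phi> x))" unfolding m_def using fin by (rule E_sum) simp
  also have "\<dots> \<le> (\<Sum>x\<in>set_pmf Dd. pmf Dd x * (1 + (- lm * \<phi> x) + (- lm * \<phi> x)\<^sup>2))"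
  proof (intro sum_mono mult_left_mono exp_le_quad)
    fix x assume x: "x \<in> set_pmf Dd"
    have "- lm * \<phi> x \<le> lm * \<bar>\<phi> x\<bar>" using mult_left_mono[OF abs_ge_minus_self[of "\<phi> x"], of lm] lam(1) by simp
    also have "\<dots> \<le> lm * B" using bnd[OF x] lam(1) by (simp add: mult_left_mono)
    finally show "- lm * \<phi> x \<le> 1" using lam(2) by simp
  qed simp
  also have "\<dots> = (\<Sum>x\<in>set_pmf Dd. pmf Dd x) - lm * (\<Sum>x\<in>set_pmf Dd. pmf Dd x * \<phi> x)
                  + lm\<^sup>2 * (\<Sum>x\<in>set_pmf Dd. pmf Dd x * (\<phi> x)\<^sup>2)"
    by (simp add: algebra_simps sum.distrib sum_subtractf sum_distrib_left power2_eq_square)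
  also have "\<dots> = 1 - lm * \<mu> + lm\<^sup>2 * measure_pmf.expectation Dd (\<lambda>x. (\<phi> x)\<^sup>2)"
    using sum_pmf_eq_1[OF fin] E_sum[OF fin, of Dd] mu(1) by simp
  also have "\<dots> \<le> 1 - lm * \<mu> + lm\<^sup>2 * (K * \<mu>)"
    using var by (simp add: mult_left_mono)
  also have "\<dots> \<le> 1 + (- lm * \<mu> / 2)"
  proof -
    have "lm\<^sup>2 * (K * \<mu>) = lm * ((lm * K) * \<mu>)" by (simp add: power2_eq_square algebra_simps)
    also have "lm * ((lm * K) * \<mu>) \<le> lm * ((1/2) * \<mu>)"
      using lam mu(2) by (intro mult_left_mono mult_right_mono) auto
    finally show ?thesis by simp
  qed
  also have "\<dots> \<le> exp (- lm * \<mu> / 2)" by (rule exp_ge_add_one_self)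
  finally have mle: "m \<le> exp (- lm * \<mu> / 2)" .
  have "m ^ n \<le> exp (- lm * \<mu> / 2) ^ n" using mle m0 by (rule power_mono)
  also have "\<dots> = exp (real n * (- lm * \<mu> / 2))" by (rule exp_of_nat_mult[symmetric])
  finally have mn: "m ^ n \<le> exp (real n * (- lm * \<mu> / 2))" .
  have "measure_pmf.prob Q {Ds. (\<Sum>i<n. \<phi> (Ds i)) < a} \<le> measure_pmf.prob Q {Ds \<in> space (measure_pmf Q). c \<le> Y Ds}"
    using sub by (intro measure_pmf.finite_measure_mono) auto
  also have "\<dots> \<le> measure_pmf.expectation Q Y / c"
    using intY cpos by (intro integral_Markov_inequality_measure) (auto simp: Y_def intro!: prod_nonneg)
  also have "\<dots> \<le> exp (real n * (- lm * \<mu> / 2)) / c" using EY mn cpos by (simp add: divide_right_mono)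
  also have "\<dots> = exp (real n * (- lm * \<mu> / 2) + lm * a)" unfolding c_def by (simp add: exp_diff[symmetric])
  also have "real n * (- lm * \<mu> / 2) + lm * a = - ln (1/\<delta>')" unfolding a_def using lam(1) by (simp add: field_simps)
  also have "exp (- ln (1/\<delta>')) = \<delta>'" using dp by (simp add: ln_div)
  finally show ?thesis unfolding Q_def a_def .
qed



lemma sum_lin:
  fixes p F :: "'a \<Rightarrow> real"
  shows "(\<Sum>x\<in>X. p x * (c1 - c2 * F x)) = c1 * (\<Sum>x\<in>X. p x) - c2 * (\<Sum>x\<in>X. p x * F x)"
proof -
  have "(\<Sum>x\<in>X. p x * (c1 - c2 * F x)) = (\<Sum>x\<in>X. c1 * p x - c2 * (p x * F x))"
    by (rule sum.cong) (auto simp: algebra_simps)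
  also have "\<dots> = (\<Sum>x\<in>X. c1 * p x) - (\<Sum>x\<in>X. c2 * (p x * F x))" by (rule sum_subtractf)
  also have "\<dots> = c1 * (\<Sum>x\<in>X. p x) - c2 * (\<Sum>x\<in>X. p x * F x)" by (simp add: sum_distrib_left)
  finally show ?thesis .
qed

lemma Lhat_diff:
  "Lhat A \<gamma> n Ds g f pol - Lhat A \<gamma> n Ds h f pol =
   (1 / real n) * (\<Sum>i<n. (\<lambda>(s,a,r,s'). (g s a - r - \<gamma> * fpol A f pol s')\<^sup>2 - (h s a - r - \<gamma> * fpol A f pol s')\<^sup>2) (Ds i))"
  unfolding Lhat_def by (simp add: sum_subtractf diff_divide_distrib case_prod_beta)

context mdp begin

lemma D_supp:
  assumes "set_pmf dD \<subseteq> S \<times> A" "z \<in> set_pmf (Dsample P R dD)"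
  shows "\<exists>s a s'. z = (s, a, R s a, s') \<and> s \<in> S \<and> a \<in> A \<and> s' \<in> S"
proof -
  obtain s a s' where z: "(s,a) \<in> set_pmf dD" "s' \<in> set_pmf (P s a)" "z = (s,a,R s a,s')"
    using assms(2) unfolding Dsample_def by (auto simp: set_bind_pmf)
  have sa: "s \<in> S" "a \<in> A" using assms(1) z(1) by auto
  have "s' \<in> S" using Pcl[OF sa] z(2) by auto
  thus ?thesis using sa z(3) by blast
qed

lemma D_fin:
  assumes "set_pmf dD \<subseteq> S \<times> A"
  shows "finite (set_pmf (Dsample P R dD))"
proof (rule finite_subset)
  show "set_pmf (Dsample P R dD) \<subseteq> (\<lambda>(s,a,s'). (s, a, R s a, s')) ` (S \<times> A \<times> S)"
  proof
    fix z assume "z \<in> set_pmf (Dsample P R dD)"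
    then obtain s a s' where z: "z = (s, a, R s a, s')" "s \<in> S" "a \<in> A" "s' \<in> S"
      using D_supp[OF assms] by blast
    thus "z \<in> (\<lambda>(s,a,s'). (s, a, R s a, s')) ` (S \<times> A \<times> S)" by (intro rev_image_eqI[of "(s,a,s')"]) auto
  qed
  show "finite ((\<lambda>(s,a,s'). (s, a, R s a, s')) ` (S \<times> A \<times> S))" using finS finA by simp
qed

lemma E_D:
  fixes \<Phi> :: "sample \<Rightarrow> real"
  assumes "set_pmf dD \<subseteq> S \<times> A"
  shows "measure_pmf.expectation (Dsample P R dD) \<Phi> =
     (\<Sum>x\<in>S\<times>A. pmf dD x * measure_pmf.expectation (P (fst x) (snd x)) (\<lambda>s'. \<Phi> (fst x, snd x, R (fst x) (snd x), s')))"
proof -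
  define Y where "Y = (\<lambda>(s,a,s'). (s, a, R s a, s')) ` (S \<times> A \<times> S)"
  have "measure_pmf.expectation (Dsample P R dD) \<Phi> =
     (\<Sum>x\<in>S\<times>A. pmf dD x * measure_pmf.expectation ((\<lambda>(s, a). map_pmf (\<lambda>s'. (s, a, R s a, s')) (P s a)) x) \<Phi>)"
    unfolding Dsample_def
  proof (rule E_bind[OF finSA assms])
    show "finite Y" unfolding Y_def using finS finA by simp
    fix x assume "x \<in> S \<times> A"
    then obtain s a where sa: "x = (s,a)" "s \<in> S" "a \<in> A" by auto
    show "set_pmf ((\<lambda>(s, a). map_pmf (\<lambda>s'. (s, a, R s a, s')) (P s a)) x) \<subseteq> Y"
    proof
      fix z assume "z \<in> set_pmf ((\<lambda>(s, a). map_pmf (\<lambda>s'. (s, a, R s a, s')) (P s a)) x)"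
      then obtain s' where s': "s' \<in> set_pmf (P s a)" "z = (s,a,R s a,s')" using sa(1) by auto
      have "s' \<in> S" using Pcl[OF sa(2,3)] s'(1) by auto
      thus "z \<in> Y" unfolding Y_def using s'(2) sa by (intro rev_image_eqI[of "(s,a,s')"]) auto
    qed
  qed
  also have "\<dots> = (\<Sum>x\<in>S\<times>A. pmf dD x * measure_pmf.expectation (P (fst x) (snd x)) (\<lambda>s'. \<Phi> (fst x, snd x, R (fst x) (snd x), s')))"
    by (intro sum.cong refl) (auto simp: case_prod_beta)
  finally show ?thesis .
qed

lemma loss_facts:
  fixes g h :: "nat \<Rightarrow> nat \<Rightarrow> real" and Fp :: "nat \<Rightarrow> real"
  assumes dDS: "set_pmf dD \<subseteq> S \<times> A"
    and Rb: "\<forall>s\<in>S. \<forall>a\<in>A. 0 \<le> R s a \<and> R s a \<le> Rmax"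
    and Vdef: "V = Rmax / (1 - \<gamma>)"
    and gb: "\<forall>s\<in>S. \<forall>a\<in>A. 0 \<le> g s a \<and> g s a \<le> V"
    and hb: "\<forall>s\<in>S. \<forall>a\<in>A. 0 \<le> h s a \<and> h s a \<le> V"
    and Fb: "\<forall>s\<in>S. 0 \<le> Fp s \<and> Fp s \<le> V"
    and hbell: "\<forall>s\<in>S. \<forall>a\<in>A. h s a = R s a + \<gamma> * measure_pmf.expectation (P s a) Fp"
  defines "\<phi> \<equiv> (\<lambda>(s,a,r,s'). (g s a - r - \<gamma> * Fp s')\<^sup>2 - (h s a - r - \<gamma> * Fp s')\<^sup>2)"
    and "\<mu> \<equiv> (\<Sum>x\<in>S\<times>A. pmf dD x * (g (fst x) (snd x) - h (fst x) (snd x))\<^sup>2)"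
  shows "\<And>z. z \<in> set_pmf (Dsample P R dD) \<Longrightarrow> \<bar>\<phi> z\<bar> \<le> 2 * V\<^sup>2"
    and "measure_pmf.expectation (Dsample P R dD) \<phi> = \<mu>"
    and "measure_pmf.expectation (Dsample P R dD) (\<lambda>z. (\<phi> z)\<^sup>2) \<le> (4 * V\<^sup>2) * \<mu>"
    and "0 \<le> \<mu>"
proof -
  have RV: "Rmax + \<gamma> * V = V" using g1 unfolding Vdef by (simp add: field_simps)
  have pw: "\<phi> (s, a, R s a, s') = (g s a - h s a) * (g s a + h s a - 2 * (R s a + \<gamma> * Fp s'))
          \<and> \<bar>g s a - h s a\<bar> \<le> V \<and> \<bar>g s a + h s a - 2 * (R s a + \<gamma> * Fp s')\<bar> \<le> 2 * V"
    if "s \<in> S" "a \<in> A" "s' \<in> S" for s a s'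
  proof (intro conjI)
    show "\<phi> (s, a, R s a, s') = (g s a - h s a) * (g s a + h s a - 2 * (R s a + \<gamma> * Fp s'))"
      unfolding \<phi>_def by (simp add: power2_eq_square algebra_simps)
    show "\<bar>g s a - h s a\<bar> \<le> V" using gb hb that by fastforce
    have "0 \<le> \<gamma> * Fp s'" "\<gamma> * Fp s' \<le> \<gamma> * V" using Fb that g0 by (auto intro: mult_left_mono)
    thus "\<bar>g s a + h s a - 2 * (R s a + \<gamma> * Fp s')\<bar> \<le> 2 * V" using gb hb Rb RV that by fastforce
  qed
  show "\<bar>\<phi> z\<bar> \<le> 2 * V\<^sup>2" if zD: "z \<in> set_pmf (Dsample P R dD)" for z
  proof -
    obtain s a s' where z: "z = (s, a, R s a, s')" "s \<in> S" "a \<in> A" "s' \<in> S"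
      using D_supp[OF dDS zD] by blast
    have "\<bar>\<phi> z\<bar> = \<bar>g s a - h s a\<bar> * \<bar>g s a + h s a - 2 * (R s a + \<gamma> * Fp s')\<bar>"
      using pw[OF z(2-4)] z(1) by (simp add: abs_mult)
    also have "\<dots> \<le> V * (2 * V)" using pw[OF z(2-4)] by (intro mult_mono) auto
    finally show ?thesis by (simp add: power2_eq_square)
  qed
  show "0 \<le> \<mu>" unfolding \<mu>_def by (intro sum_nonneg mult_nonneg_nonneg) auto
  have inner: "measure_pmf.expectation (P s a) (\<lambda>s'. \<phi> (s, a, R s a, s')) = (g s a - h s a)\<^sup>2"
    if "s \<in> S" "a \<in> A" for s a
  proof -
    have PS: "set_pmf (P s a) \<subseteq> S" using Pcl that by auto
    have "measure_pmf.expectation (P s a) (\<lambda>s'. \<phi> (s, a, R s a, s'))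
       = (\<Sum>s'\<in>S. pmf (P s a) s' * ((g s a - h s a) * (g s a + h s a - 2 * R s a) - (2 * \<gamma> * (g s a - h s a)) * Fp s'))"
    proof -
      have "measure_pmf.expectation (P s a) (\<lambda>s'. \<phi> (s, a, R s a, s')) = (\<Sum>s'\<in>S. pmf (P s a) s' * \<phi> (s, a, R s a, s'))"
        using E_sum[OF finS PS] by simp
      also have "\<dots> = (\<Sum>s'\<in>S. pmf (P s a) s' * ((g s a - h s a) * (g s a + h s a - 2 * R s a) - (2 * \<gamma> * (g s a - h s a)) * Fp s'))"
      proof (intro sum.cong refl)
        fix s' assume s': "s' \<in> S"
        have "\<phi> (s, a, R s a, s') = (g s a - h s a) * (g s a + h s a - 2 * R s a) - (2 * \<gamma> * (g s a - h s a)) * Fp s'"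
          using pw[OF that s'] by (simp add: algebra_simps)
        thus "pmf (P s a) s' * \<phi> (s, a, R s a, s') = pmf (P s a) s' * ((g s a - h s a) * (g s a + h s a - 2 * R s a) - (2 * \<gamma> * (g s a - h s a)) * Fp s')"
          by simp
      qed
      finally show ?thesis .
    qed
    also have "\<dots> = (g s a - h s a) * (g s a + h s a - 2 * R s a) * (\<Sum>s'\<in>S. pmf (P s a) s')
        - (2 * \<gamma> * (g s a - h s a)) * (\<Sum>s'\<in>S. pmf (P s a) s' * Fp s')"
      by (rule sum_lin)
    also have "\<dots> = (g s a - h s a) * (g s a + h s a - 2 * R s a) - (2 * \<gamma> * (g s a - h s a)) * measure_pmf.expectation (P s a) Fp"
      using sum_pmf_eq_1[OF finS PS] E_sum[OF finS PS] by simp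
    also have "\<dots> = (g s a - h s a)\<^sup>2" using hbell that by (simp add: power2_eq_square algebra_simps)
    finally show ?thesis .
  qed
  show "measure_pmf.expectation (Dsample P R dD) \<phi> = \<mu>"
    unfolding E_D[OF dDS] \<mu>_def using inner by (intro sum.cong refl) auto
  have inner2: "measure_pmf.expectation (P s a) (\<lambda>s'. (\<phi> (s, a, R s a, s'))\<^sup>2) \<le> 4 * V\<^sup>2 * (g s a - h s a)\<^sup>2"
    if "s \<in> S" "a \<in> A" for s a
  proof -
    have PS: "set_pmf (P s a) \<subseteq> S" using Pcl that by auto
    have "measure_pmf.expectation (P s a) (\<lambda>s'. (\<phi> (s, a, R s a, s'))\<^sup>2)
       = (\<Sum>s'\<in>S. pmf (P s a) s' * (\<phi> (s, a, R s a, s'))\<^sup>2)" using E_sum[OF finS PS] by simp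
    also have "\<dots> \<le> (\<Sum>s'\<in>S. pmf (P s a) s' * (4 * V\<^sup>2 * (g s a - h s a)\<^sup>2))"
    proof (intro sum_mono mult_left_mono)
      fix s' assume s': "s' \<in> S"
      have "(\<phi> (s, a, R s a, s'))\<^sup>2 = (g s a - h s a)\<^sup>2 * (g s a + h s a - 2 * (R s a + \<gamma> * Fp s'))\<^sup>2"
        using pw[OF that s'] by (simp add: power_mult_distrib)
      also have "\<dots> \<le> (g s a - h s a)\<^sup>2 * (2 * V)\<^sup>2"
      proof (intro mult_left_mono)
        have "\<bar>g s a + h s a - 2 * (R s a + \<gamma> * Fp s')\<bar> \<le> 2 * V" using pw[OF that s'] by blast
        hence "\<bar>g s a + h s a - 2 * (R s a + \<gamma> * Fp s')\<bar>\<^sup>2 \<le> (2 * V)\<^sup>2" by (intro power_mono) auto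
        thus "(g s a + h s a - 2 * (R s a + \<gamma> * Fp s'))\<^sup>2 \<le> (2 * V)\<^sup>2" by simp
      qed simp
      finally show "(\<phi> (s, a, R s a, s'))\<^sup>2 \<le> 4 * V\<^sup>2 * (g s a - h s a)\<^sup>2" by (simp add: power2_eq_square algebra_simps)
    qed simp
    also have "\<dots> = 4 * V\<^sup>2 * (g s a - h s a)\<^sup>2" using sum_pmf_eq_1[OF finS PS] by (simp add: sum_distrib_right[symmetric])
    finally show ?thesis .
  qed
  have "measure_pmf.expectation (Dsample P R dD) (\<lambda>z. (\<phi> z)\<^sup>2)
      \<le> (\<Sum>x\<in>S\<times>A. pmf dD x * (4 * V\<^sup>2 * (g (fst x) (snd x) - h (fst x) (snd x))\<^sup>2))"
    unfolding E_D[OF dDS] using inner2 by (intro sum_mono mult_left_mono) auto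
  also have "\<dots> = (4 * V\<^sup>2) * \<mu>" unfolding \<mu>_def by (simp add: sum_distrib_left algebra_simps)
  finally show "measure_pmf.expectation (Dsample P R dD) (\<lambda>z. (\<phi> z)\<^sup>2) \<le> (4 * V\<^sup>2) * \<mu>" .
qed

end


lemma Ehat_le:
  assumes "finite F" "F \<noteq> {}" "\<And>g. g \<in> F \<Longrightarrow> Lhat A \<gamma> n Ds f f pol - Lhat A \<gamma> n Ds g f pol \<le> e"
  shows "Ehat A \<gamma> n Ds F f pol \<le> e"
  unfolding Ehat_def using assms by (subst Max_le_iff) auto

lemma Ehat_ge:
  assumes "finite F" "g \<in> F"
  shows "Lhat A \<gamma> n Ds f f pol - Lhat A \<gamma> n Ds g f pol \<le> Ehat A \<gamma> n Ds F f pol"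
  unfolding Ehat_def using assms by (intro Max_ge) auto

context mdp begin

lemma E_congS:
  fixes u v :: "nat \<Rightarrow> real"
  assumes "set_pmf p \<subseteq> S" "\<And>s. s \<in> S \<Longrightarrow> u s = v s"
  shows "measure_pmf.expectation p u = measure_pmf.expectation p v"
  using E_sum[OF finS assms(1), of u] E_sum[OF finS assms(1), of v] assms(2) by simp

lemma fpol_cong:
  assumes "s \<in> S" "\<forall>s\<in>S. \<forall>a\<in>A. f s a = g s a"
  shows "fpol A f pol s = fpol A g pol s"
  unfolding fpol_def using assms by simp

lemma fpol_bnd:
  assumes "okpol pol" "s \<in> S" "\<forall>s\<in>S. \<forall>a\<in>A. 0 \<le> f s a \<and> f s a \<le> V"
  shows "0 \<le> fpol A f pol s \<and> fpol A f pol s \<le> V"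
proof -
  have pA: "set_pmf (pol s) \<subseteq> A" using assms(1,2) unfolding okpol_def by auto
  have "fpol A f pol s \<le> (\<Sum>a\<in>A. pmf (pol s) a * V)"
    unfolding fpol_def using assms(2,3) by (intro sum_mono mult_left_mono) auto
  also have "\<dots> = V" using sum_pmf_eq_1[OF finA pA] by (simp add: sum_distrib_right[symmetric])
  finally show ?thesis unfolding fpol_def using assms(2,3) by (auto intro!: sum_nonneg)
qed

lemma Jf_cong:
  assumes "set_pmf d0 \<subseteq> S" "\<forall>s\<in>S. \<forall>a\<in>A. f s a = g s a"
  shows "Jf A d0 f pol = Jf A d0 g pol"
  unfolding Jf_def using fpol_cong[OF _ assms(2)] by (intro E_congS[OF assms(1)]) auto

lemma det_final:
  assumes d0S: "set_pmf d0 \<subseteq> S" and x0: "x0 \<in> S \<times> A"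
    and conc: "conc S A P \<gamma> d0 dD pi_cp < \<infinity>" and bp: "0 < \<beta>" and finF: "finite F"
    and cpP: "pi_cp \<in> Pol" and okP: "\<forall>pol\<in>Pol. okpol pol"
    and GA: "\<forall>pol\<in>Pol. \<exists>q\<in>F. (\<forall>s\<in>S. \<forall>a\<in>A. q s a = Qfun P R \<gamma> pol s a) \<and> Ehat A \<gamma> n Ds F q pol \<le> eps"
    and GB: "\<forall>f\<in>F. Ehat A \<gamma> n Ds F f pi_cp \<le> eps \<longrightarrow> (\<exists>h. (\<forall>s\<in>S. \<forall>a\<in>A. h s a = bellman A P R \<gamma> pi_cp f s a)
              \<and> (\<Sum>x\<in>S\<times>A. pmf dD x * (h (fst x) (snd x) - f (fst x) (snd x))\<^sup>2) \<le> \<beta>)"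
    and hP: "pi_hat \<in> Pol"
    and amax: "\<forall>pol\<in>Pol. JVS A \<gamma> d0 n Ds F eps pol \<le> JVS A \<gamma> d0 n Ds F eps pi_hat"
  shows "Jret P R \<gamma> d0 pi_cp - Jret P R \<gamma> d0 pi_hat \<le> sqrt (real_of_ereal (conc S A P \<gamma> d0 dD pi_cp) * \<beta>) / (1 - \<gamma>)"
proof -
  define Vc where "Vc = vspace A \<gamma> n Ds F eps pi_cp"
  define Vh where "Vh = vspace A \<gamma> n Ds F eps pi_hat"
  obtain qc where qc: "qc \<in> F" "\<forall>s\<in>S. \<forall>a\<in>A. qc s a = Qfun P R \<gamma> pi_cp s a" "Ehat A \<gamma> n Ds F qc pi_cp \<le> eps"
    using GA cpP by blast
  obtain qh where qh: "qh \<in> F" "\<forall>s\<in>S. \<forall>a\<in>A. qh s a = Qfun P R \<gamma> pi_hat s a" "Ehat A \<gamma> n Ds F qh pi_hat \<le> eps"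
    using GA hP by blast
  have qcV: "qc \<in> Vc" unfolding Vc_def vspace_def using qc by simp
  have qhV: "qh \<in> Vh" unfolding Vh_def vspace_def using qh by simp
  have finVc: "finite Vc" unfolding Vc_def vspace_def using finF by simp
  have finVh: "finite Vh" unfolding Vh_def vspace_def using finF by simp
  have Jc: "JVS A \<gamma> d0 n Ds F eps pi_cp = ereal (Min ((\<lambda>f. Jf A d0 f pi_cp) ` Vc))"
    unfolding JVS_def Vc_def[symmetric] Let_def using qcV by auto
  have Jh: "JVS A \<gamma> d0 n Ds F eps pi_hat = ereal (Min ((\<lambda>f. Jf A d0 f pi_hat) ` Vh))"
    unfolding JVS_def Vh_def[symmetric] Let_def using qhV by auto
  have "Min ((\<lambda>f. Jf A d0 f pi_cp) ` Vc) \<in> (\<lambda>f. Jf A d0 f pi_cp) ` Vc"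
    using finVc qcV by (intro Min_in) auto
  then obtain fs where fs: "fs \<in> Vc" "Jf A d0 fs pi_cp = Min ((\<lambda>f. Jf A d0 f pi_cp) ` Vc)" by auto
  have "Min ((\<lambda>f. Jf A d0 f pi_hat) ` Vh) \<le> Jf A d0 qh pi_hat"
    using finVh qhV by (intro Min_le) auto
  also have "Jf A d0 qh pi_hat = Jf A d0 (Qfun P R \<gamma> pi_hat) pi_hat" by (rule Jf_cong[OF d0S qh(2)])
  also have "\<dots> = Jret P R \<gamma> d0 pi_hat" using Jret_Q[OF _ d0S] okP hP by simp
  finally have hle: "Min ((\<lambda>f. Jf A d0 f pi_hat) ` Vh) \<le> Jret P R \<gamma> d0 pi_hat" .
  have "ereal (Jf A d0 fs pi_cp) \<le> ereal (Min ((\<lambda>f. Jf A d0 f pi_hat) ` Vh))"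
    using amax cpP fs(2) Jc Jh by metis
  hence fsle: "Jf A d0 fs pi_cp \<le> Jret P R \<gamma> d0 pi_hat" using hle by simp
  have fsF: "fs \<in> F" and fsE: "Ehat A \<gamma> n Ds F fs pi_cp \<le> eps" using fs(1) unfolding Vc_def vspace_def by auto
  obtain h where h: "\<forall>s\<in>S. \<forall>a\<in>A. h s a = bellman A P R \<gamma> pi_cp fs s a"
      "(\<Sum>x\<in>S\<times>A. pmf dD x * (h (fst x) (snd x) - fs (fst x) (snd x))\<^sup>2) \<le> \<beta>"
    using GB fsF fsE by blast
  have "Jret P R \<gamma> d0 pi_cp - Jf A d0 fs pi_cp \<le> sqrt (real_of_ereal (conc S A P \<gamma> d0 dD pi_cp) * \<beta>) / (1 - \<gamma>)"
    using okP cpP by (intro pd_bound[OF _ d0S conc bp x0 h(1) h(2)]) auto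
  thus ?thesis using fsle by linarith
qed

end


context mdp begin

lemma Jret_zero:
  assumes "okpol pol" "set_pmf d0 \<subseteq> S" "\<forall>s\<in>S. \<forall>a\<in>A. R s a = 0"
  shows "Jret P R \<gamma> d0 pol = 0"
proof -
  have muS: "set_pmf (sa_dist P pol (init_sa d0 pol) t) \<subseteq> S\<times>A" for t
    by (intro sa_supp init_supp assms)
  have "measure_pmf.expectation (sa_dist P pol (init_sa d0 pol) t) (\<lambda>(s, a). R s a) = 0" for t
    using E_sum[OF finSA muS] assms(3) by (auto intro!: sum.neutral)
  thus ?thesis unfolding Jret_def by simp
qed

lemma event_prob:
  fixes g h :: "nat \<Rightarrow> nat \<Rightarrow> real" and Fp :: "nat \<Rightarrow> real"
  assumes dDS: "set_pmf dD \<subseteq> S \<times> A"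
    and Rb: "\<forall>s\<in>S. \<forall>a\<in>A. 0 \<le> R s a \<and> R s a \<le> Rmax"
    and Vdef: "V = Rmax / (1 - \<gamma>)" and Vp: "0 < V"
    and gb: "\<forall>s\<in>S. \<forall>a\<in>A. 0 \<le> g s a \<and> g s a \<le> V"
    and hb: "\<forall>s\<in>S. \<forall>a\<in>A. 0 \<le> h s a \<and> h s a \<le> V"
    and Fb: "\<forall>s\<in>S. 0 \<le> Fp s \<and> Fp s \<le> V"
    and hbell: "\<forall>s\<in>S. \<forall>a\<in>A. h s a = R s a + \<gamma> * measure_pmf.expectation (P s a) Fp"
    and dp: "0 < \<delta>'"
  shows "measure_pmf.prob (dataset_pmf n (Dsample P R dD))
     {Ds. (\<Sum>i<n. (\<lambda>(s,a,r,s'). (g s a - r - \<gamma> * Fp s')\<^sup>2 - (h s a - r - \<gamma> * Fp s')\<^sup>2) (Ds i))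
          < real n * (\<Sum>x\<in>S\<times>A. pmf dD x * (g (fst x) (snd x) - h (fst x) (snd x))\<^sup>2) / 2 - 8 * V\<^sup>2 * ln (1/\<delta>')} \<le> \<delta>'"
proof -
  define \<phi> where "\<phi> = (\<lambda>(s,a,r,s'). (g s a - r - \<gamma> * Fp s')\<^sup>2 - (h s a - r - \<gamma> * Fp s')\<^sup>2)"
  define \<mu> where "\<mu> = (\<Sum>x\<in>S\<times>A. pmf dD x * (g (fst x) (snd x) - h (fst x) (snd x))\<^sup>2)"
  note LF = loss_facts[OF dDS Rb Vdef gb hb Fb hbell, folded \<phi>_def \<mu>_def]
  have V2: "0 < V\<^sup>2" using Vp by simp
  have "measure_pmf.prob (Pi_pmf {..<n} undefined (\<lambda>_. Dsample P R dD))
           {Ds. (\<Sum>i<n. \<phi> (Ds i)) < real n * \<mu> / 2 - ln (1/\<delta>') / (1 / (8 * V\<^sup>2))} \<le> \<delta>'"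
  proof (rule chernoff[OF D_fin[OF dDS] LF(1) LF(2) LF(4) LF(3)])
    show "0 < 1 / (8 * V\<^sup>2)" using V2 by simp
    show "1 / (8 * V\<^sup>2) * (2 * V\<^sup>2) \<le> 1" using V2 by simp
    show "1 / (8 * V\<^sup>2) * (4 * V\<^sup>2) \<le> 1/2" using V2 by simp
  qed (use dp in auto)
  moreover have "ln (1/\<delta>') / (1 / (8 * V\<^sup>2)) = 8 * V\<^sup>2 * ln (1/\<delta>')" by simp
  ultimately have "measure_pmf.prob (Pi_pmf {..<n} undefined (\<lambda>_. Dsample P R dD))
           {Ds. (\<Sum>i<n. \<phi> (Ds i)) < real n * \<mu> / 2 - 8 * V\<^sup>2 * ln (1/\<delta>')} \<le> \<delta>'"
    by (simp only:)
  thus ?thesis unfolding dataset_pmf_def \<phi>_def \<mu>_def .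
qed

end

lemma main:
  fixes S A :: "nat set" and P :: "nat \<Rightarrow> nat \<Rightarrow> nat pmf" and R :: "nat \<Rightarrow> nat \<Rightarrow> real"
    and F :: "(nat \<Rightarrow> nat \<Rightarrow> real) set" and Pol :: "policy set"
  assumes finS: "finite S" and finA: "finite A"
   and Pcl: "\<forall>s\<in>S. \<forall>a\<in>A. set_pmf (P s a) \<subseteq> S"
   and Rb: "\<forall>s\<in>S. \<forall>a\<in>A. 0 \<le> R s a \<and> R s a \<le> Rmax"
   and g0: "0 \<le> \<gamma>" and g1: "\<gamma> < 1"
   and d0S: "set_pmf d0 \<subseteq> S" and dDS: "set_pmf dD \<subseteq> S \<times> A"
   and finF: "finite F"
   and Fb: "\<forall>f\<in>F. \<forall>s\<in>S. \<forall>a\<in>A. 0 \<le> f s a \<and> f s a \<le> Rmax / (1 - \<gamma>)"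
   and finP: "finite Pol" and polA: "\<forall>pol\<in>Pol. \<forall>s\<in>S. set_pmf (pol s) \<subseteq> A"
   and cpP: "pi_cp \<in> Pol"
   and conc: "conc S A P \<gamma> d0 dD pi_cp < \<infinity>"
   and compl: "\<forall>f\<in>F. \<exists>g\<in>F. \<forall>s\<in>S. \<forall>a\<in>A. g s a = bellman A P R \<gamma> pi_cp f s a"
   and realz: "\<forall>pol\<in>Pol. \<exists>g\<in>F. \<forall>s\<in>S. \<forall>a\<in>A. g s a = Qfun P R \<gamma> pol s a"
   and np: "n > 0" and dp: "0 < \<delta>" and d1: "\<delta> < 1"
  shows "measure_pmf.prob (dataset_pmf n (Dsample P R dD))
            {Ds. \<forall>pi_hat\<in>Pol.
                   (\<forall>pol\<in>Pol. JVS A \<gamma> d0 n Ds F (16 * (Rmax / (1 - \<gamma>))\<^sup>2 * ln (real (card F) * real (card Pol) / \<delta>) / real n) pol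
                      \<le> JVS A \<gamma> d0 n Ds F (16 * (Rmax / (1 - \<gamma>))\<^sup>2 * ln (real (card F) * real (card Pol) / \<delta>) / real n) pi_hat) \<longrightarrow>
                   Jret P R \<gamma> d0 pi_cp - Jret P R \<gamma> d0 pi_hat
                     \<le> 8 * (Rmax / (1 - \<gamma>)) / (1 - \<gamma>) *
                        sqrt (real_of_ereal (conc S A P \<gamma> d0 dD pi_cp) * ln (real (card F) * real (card Pol) / \<delta>) / real n)}
          \<ge> 1 - \<delta>"
proof -
  interpret M: mdp S A P R \<gamma> using finS finA Pcl g0 g1 by unfold_locales auto
  define V where "V = Rmax / (1 - \<gamma>)"
  define L where "L = ln (real (card F) * real (card Pol) / \<delta>)"
  define eps0 where "eps0 = 16 * V\<^sup>2 * L / real n"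
  define C where "C = real_of_ereal (conc S A P \<gamma> d0 dD pi_cp)"
  define DS where "DS = dataset_pmf n (Dsample P R dD)"
  define E where "E = {Ds. \<forall>pi_hat\<in>Pol.
                   (\<forall>pol\<in>Pol. JVS A \<gamma> d0 n Ds F eps0 pol \<le> JVS A \<gamma> d0 n Ds F eps0 pi_hat) \<longrightarrow>
                   Jret P R \<gamma> d0 pi_cp - Jret P R \<gamma> d0 pi_hat \<le> 8 * V / (1 - \<gamma>) * sqrt (C * L / real n)}"
  have okP: "\<forall>pol\<in>Pol. M.okpol pol" using polA unfolding M.okpol_def by auto
  obtain x0 where x0D: "x0 \<in> set_pmf dD" using set_pmf_not_empty by fastforce
  have x0: "x0 \<in> S \<times> A" using x0D dDS by auto
  have Rmax0: "0 \<le> Rmax" using Rb x0 by force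
  have V0: "0 \<le> V" unfolding V_def using Rmax0 g1 by simp
  have FbV: "\<forall>f\<in>F. \<forall>s\<in>S. \<forall>a\<in>A. 0 \<le> f s a \<and> f s a \<le> V" using Fb unfolding V_def .
  have Fne: "F \<noteq> {}" using realz cpP by blast
  have cF: "1 \<le> card F" using Fne finF by (simp add: Suc_le_eq card_gt_0_iff)
  have Pne: "Pol \<noteq> {}" using cpP by blast
  have cP: "1 \<le> card Pol" using Pne finP by (simp add: Suc_le_eq card_gt_0_iff)
  have prod1: "1 \<le> real (card F) * real (card Pol)"
  proof -
    have "1 * 1 \<le> real (card F) * real (card Pol)" using cF cP by (intro mult_mono) auto
    thus ?thesis by simp
  qed
  have ratio: "1 < real (card F) * real (card Pol) / \<delta>" using prod1 dp d1 by (simp add: less_divide_eq)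
  have Lp: "0 < L" unfolding L_def using ratio by simp
  have eps0: "0 \<le> eps0" unfolding eps0_def using Lp by simp
  have goal_eq: "?thesis \<longleftrightarrow> measure_pmf.prob DS E \<ge> 1 - \<delta>"
    unfolding DS_def E_def eps0_def V_def L_def C_def by simp
  have probUNIV: "measure_pmf.prob DS E \<ge> 1 - \<delta>" if "E = UNIV"
    using that dp by simp
  show ?thesis unfolding goal_eq
  proof (cases "V = 0")
    case True
    have R0: "\<forall>s\<in>S. \<forall>a\<in>A. R s a = 0"
    proof (intro ballI)
      fix s a assume "s \<in> S" "a \<in> A"
      moreover have "Rmax = 0" using True g1 unfolding V_def by simp
      ultimately show "R s a = 0" using Rb by force
    qed
    have "E = UNIV" unfolding E_def using M.Jret_zero[OF _ d0S R0] okP cpP True by auto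
    thus "measure_pmf.prob DS E \<ge> 1 - \<delta>" by (rule probUNIV)
  next
    case False
    hence Vp: "0 < V" using V0 by simp
    define \<beta> where "\<beta> = 64 * V\<^sup>2 * L / real n"
    have bp: "0 < \<beta>" unfolding \<beta>_def using Vp Lp np by simp
    define Good where "Good = {Ds.
      (\<forall>pol\<in>Pol. \<exists>q\<in>F. (\<forall>s\<in>S. \<forall>a\<in>A. q s a = Qfun P R \<gamma> pol s a) \<and> Ehat A \<gamma> n Ds F q pol \<le> eps0) \<and>
      (\<forall>f\<in>F. Ehat A \<gamma> n Ds F f pi_cp \<le> eps0 \<longrightarrow> (\<exists>h. (\<forall>s\<in>S. \<forall>a\<in>A. h s a = bellman A P R \<gamma> pi_cp f s a)
              \<and> (\<Sum>x\<in>S\<times>A. pmf dD x * (h (fst x) (snd x) - f (fst x) (snd x))\<^sup>2) \<le> \<beta>))}"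
    have sq: "sqrt (C * \<beta>) / (1 - \<gamma>) = 8 * V / (1 - \<gamma>) * sqrt (C * L / real n)"
    proof -
      have e1: "C * \<beta> = (8 * V)\<^sup>2 * (C * L / real n)" unfolding \<beta>_def by (simp add: power2_eq_square field_simps)
      have "sqrt (C * \<beta>) = sqrt ((8 * V)\<^sup>2) * sqrt (C * L / real n)" unfolding e1 by (rule real_sqrt_mult)
      also have "sqrt ((8 * V)\<^sup>2) = 8 * V" by (subst real_sqrt_abs) (use V0 in simp)
      finally have "sqrt (C * \<beta>) = 8 * V * sqrt (C * L / real n)" .
      thus ?thesis by simp
    qed
    have GoodE: "Good \<subseteq> E"
    proof
      fix Ds assume G: "Ds \<in> Good"
      show "Ds \<in> E" unfolding E_def
      proof (intro CollectI ballI impI)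
        fix pi_hat assume hP: "pi_hat \<in> Pol"
          and am: "\<forall>pol\<in>Pol. JVS A \<gamma> d0 n Ds F eps0 pol \<le> JVS A \<gamma> d0 n Ds F eps0 pi_hat"
        have "Jret P R \<gamma> d0 pi_cp - Jret P R \<gamma> d0 pi_hat \<le> sqrt (C * \<beta>) / (1 - \<gamma>)"
          unfolding C_def using G unfolding Good_def
          by (intro M.det_final[OF d0S x0 conc bp finF cpP okP _ _ hP am]) auto
        thus "Jret P R \<gamma> d0 pi_cp - Jret P R \<gamma> d0 pi_hat \<le> 8 * V / (1 - \<gamma>) * sqrt (C * L / real n)"
          using sq by simp
      qed
    qed
    have probGood: "measure_pmf.prob DS Good \<ge> 1 - \<delta>"
    proof (cases "card F = 1")
      case True
      then obtain f0 where F0: "F = {f0}" by (auto simp: card_1_singleton_iff)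
      have "Good = UNIV"
      proof -
        have "Ehat A \<gamma> n Ds F f0 pol \<le> eps0" for Ds pol
          using eps0 by (intro Ehat_le) (auto simp: F0)
        moreover have "\<exists>h. (\<forall>s\<in>S. \<forall>a\<in>A. h s a = bellman A P R \<gamma> pi_cp f0 s a)
              \<and> (\<Sum>x\<in>S\<times>A. pmf dD x * (h (fst x) (snd x) - f0 (fst x) (snd x))\<^sup>2) \<le> \<beta>"
          using compl bp by (intro exI[of _ f0]) (auto simp: F0)
        ultimately show ?thesis unfolding Good_def using realz by (auto simp: F0)
      qed
      thus ?thesis using dp by simp
    next
      case False
      hence cF2: "2 \<le> card F" using cF by linarith
      define \<delta>' where "\<delta>' = \<delta> / (2 * real (card F) * real (card Pol))"
      define l where "l = ln (1 / \<delta>')"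
      have d'p: "0 < \<delta>'" unfolding \<delta>'_def using dp cF cP by simp
      have l_eq: "l = ln 2 + L"
      proof -
        have "1 / \<delta>' = 2 * (real (card F) * real (card Pol) / \<delta>)" unfolding \<delta>'_def by simp
        hence "l = ln (2 * (real (card F) * real (card Pol) / \<delta>))" unfolding l_def by simp
        also have "\<dots> = ln 2 + L" unfolding L_def using ratio cF cP by (subst ln_mult) auto
        finally show ?thesis .
      qed
      have "2 \<le> real (card F) * real (card Pol) / \<delta>"
      proof -
        have "2 * 1 \<le> real (card F) * real (card Pol)" using cF2 cP by (intro mult_mono) auto
        hence "2 \<le> real (card F) * real (card Pol)" by simp
        also have "\<dots> \<le> real (card F) * real (card Pol) / \<delta>"
        proof -
          have "real (card F) * real (card Pol) * \<delta> \<le> real (card F) * real (card Pol) * 1"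
            using prod1 d1 by (intro mult_left_mono) auto
          thus ?thesis using dp by (simp add: le_divide_eq)
        qed
        finally show ?thesis .
      qed
      hence "ln 2 \<le> L" unfolding L_def by simp
      hence l2L: "l \<le> 2 * L" using l_eq by simp
      have lVL: "8 * V\<^sup>2 * l \<le> 16 * V\<^sup>2 * L" using l2L Vp by simp
      have lpos: "0 \<le> l" using l_eq Lp by simp
      define qP where "qP pol = (SOME q. q \<in> F \<and> (\<forall>s\<in>S. \<forall>a\<in>A. q s a = Qfun P R \<gamma> pol s a))" for pol
      define hF where "hF f = (SOME h. h \<in> F \<and> (\<forall>s\<in>S. \<forall>a\<in>A. h s a = bellman A P R \<gamma> pi_cp f s a))" for f
      have qP: "qP pol \<in> F \<and> (\<forall>s\<in>S. \<forall>a\<in>A. qP pol s a = Qfun P R \<gamma> pol s a)" if "pol \<in> Pol" for pol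
      proof -
        have "\<exists>q. q \<in> F \<and> (\<forall>s\<in>S. \<forall>a\<in>A. q s a = Qfun P R \<gamma> pol s a)" using realz that by blast
        thus ?thesis unfolding qP_def by (rule someI_ex)
      qed
      have hF: "hF f \<in> F \<and> (\<forall>s\<in>S. \<forall>a\<in>A. hF f s a = bellman A P R \<gamma> pi_cp f s a)" if "f \<in> F" for f
      proof -
        have "\<exists>h. h \<in> F \<and> (\<forall>s\<in>S. \<forall>a\<in>A. h s a = bellman A P R \<gamma> pi_cp f s a)" using compl that by blast
        thus ?thesis unfolding hF_def by (rule someI_ex)
      qed
      define phiA where "phiA pol g = (\<lambda>(s,a,r,s'). (g s a - r - \<gamma> * fpol A (qP pol) pol s')\<^sup>2
                                                  - (qP pol s a - r - \<gamma> * fpol A (qP pol) pol s')\<^sup>2)" for pol g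
      define muA where "muA pol g = (\<Sum>x\<in>S\<times>A. pmf dD x * (g (fst x) (snd x) - qP pol (fst x) (snd x))\<^sup>2)" for pol g
      define phiB where "phiB f = (\<lambda>(s,a,r,s'). (f s a - r - \<gamma> * fpol A f pi_cp s')\<^sup>2
                                                  - (hF f s a - r - \<gamma> * fpol A f pi_cp s')\<^sup>2)" for f
      define muB where "muB f = (\<Sum>x\<in>S\<times>A. pmf dD x * (f (fst x) (snd x) - hF f (fst x) (snd x))\<^sup>2)" for f
      define FA where "FA p = {Ds. (\<Sum>i<n. phiA (fst p) (snd p) (Ds i)) < real n * muA (fst p) (snd p) / 2 - 8 * V\<^sup>2 * l}" for p
      define FB where "FB f = {Ds. (\<Sum>i<n. phiB f (Ds i)) < real n * muB f / 2 - 8 * V\<^sup>2 * l}" for f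
      have muA0: "0 \<le> muA pol g" for pol g unfolding muA_def by (intro sum_nonneg mult_nonneg_nonneg) auto
      have probA: "measure_pmf.prob DS (FA p) \<le> \<delta>'" if pPF: "p \<in> Pol \<times> F" for p
      proof -
        obtain pol g where p: "p = (pol, g)" "pol \<in> Pol" "g \<in> F" using pPF by auto
        have ok: "M.okpol pol" using okP p by auto
        have qF: "qP pol \<in> F" and qQ: "\<forall>s\<in>S. \<forall>a\<in>A. qP pol s a = Qfun P R \<gamma> pol s a" using qP[OF p(2)] by auto
        have hbell: "\<forall>s\<in>S. \<forall>a\<in>A. qP pol s a = R s a + \<gamma> * measure_pmf.expectation (P s a) (fpol A (qP pol) pol)"
        proof (intro ballI)
          fix s a assume sa: "s \<in> S" "a \<in> A"
          have "qP pol s a = bellman A P R \<gamma> pol (Qfun P R \<gamma> pol) s a" using qQ sa M.Qfun_bellman[OF ok sa] by simp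
          also have "\<dots> = R s a + \<gamma> * measure_pmf.expectation (P s a) (fpol A (qP pol) pol)"
          proof -
            have QqP: "\<forall>s\<in>S. \<forall>a\<in>A. Qfun P R \<gamma> pol s a = qP pol s a" using qQ by simp
            have "measure_pmf.expectation (P s a) (fpol A (Qfun P R \<gamma> pol) pol) = measure_pmf.expectation (P s a) (fpol A (qP pol) pol)"
              using Pcl sa by (intro M.E_congS M.fpol_cong[OF _ QqP]) auto
            thus ?thesis unfolding bellman_def by simp
          qed
          finally show "qP pol s a = R s a + \<gamma> * measure_pmf.expectation (P s a) (fpol A (qP pol) pol)" .
        qed
        show ?thesis unfolding FA_def p phiA_def muA_def DS_def fst_conv snd_conv l_def
          by (rule M.event_prob[OF dDS Rb V_def Vp _ _ _ hbell d'p])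
             (use FbV p qF ok M.fpol_bnd[OF ok _ bspec[OF FbV qF]] in auto)
      qed
      have probB: "measure_pmf.prob DS (FB f) \<le> \<delta>'" if "f \<in> F" for f
      proof -
        have ok: "M.okpol pi_cp" using okP cpP by auto
        have hF1: "hF f \<in> F" and hF2: "\<forall>s\<in>S. \<forall>a\<in>A. hF f s a = bellman A P R \<gamma> pi_cp f s a" using hF[OF that] by auto
        have hbell: "\<forall>s\<in>S. \<forall>a\<in>A. hF f s a = R s a + \<gamma> * measure_pmf.expectation (P s a) (fpol A f pi_cp)"
          using hF2 unfolding bellman_def by simp
        show ?thesis unfolding FB_def phiB_def muB_def DS_def l_def
          by (rule M.event_prob[OF dDS Rb V_def Vp _ _ _ hbell d'p])
             (use FbV that hF1 M.fpol_bnd[OF ok _ bspec[OF FbV that]] in auto)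
      qed
      have cover: "UNIV - Good \<subseteq> (\<Union>p\<in>Pol \<times> F. FA p) \<union> (\<Union>f\<in>F. FB f)"
      proof
        fix Ds assume "Ds \<in> UNIV - Good"
        hence nG: "Ds \<notin> Good" by simp
        show "Ds \<in> (\<Union>p\<in>Pol \<times> F. FA p) \<union> (\<Union>f\<in>F. FB f)"
        proof (rule ccontr)
          assume "Ds \<notin> (\<Union>p\<in>Pol \<times> F. FA p) \<union> (\<Union>f\<in>F. FB f)"
          hence nFA: "\<And>p. p \<in> Pol \<times> F \<Longrightarrow> Ds \<notin> FA p" and nFB: "\<And>f. f \<in> F \<Longrightarrow> Ds \<notin> FB f" by auto
          have nA: "real n * muA pol g / 2 - 8 * V\<^sup>2 * l \<le> (\<Sum>i<n. phiA pol g (Ds i))" if "pol \<in> Pol" "g \<in> F" for pol g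
            using nFA[of "(pol, g)"] that unfolding FA_def by (simp add: not_less)
          have nB: "real n * muB f / 2 - 8 * V\<^sup>2 * l \<le> (\<Sum>i<n. phiB f (Ds i))" if "f \<in> F" for f
            using nFB[of f] that unfolding FB_def by (simp add: not_less)
          have GA: "\<forall>pol\<in>Pol. \<exists>q\<in>F. (\<forall>s\<in>S. \<forall>a\<in>A. q s a = Qfun P R \<gamma> pol s a) \<and> Ehat A \<gamma> n Ds F q pol \<le> eps0"
          proof
            fix pol assume pol: "pol \<in> Pol"
            have "Ehat A \<gamma> n Ds F (qP pol) pol \<le> eps0"
            proof (rule Ehat_le[OF finF Fne])
              fix g assume g: "g \<in> F"
              have "Lhat A \<gamma> n Ds g (qP pol) pol - Lhat A \<gamma> n Ds (qP pol) (qP pol) pol = (1 / real n) * (\<Sum>i<n. phiA pol g (Ds i))"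
                unfolding phiA_def by (rule Lhat_diff)
              moreover have "- 8 * V\<^sup>2 * l \<le> (\<Sum>i<n. phiA pol g (Ds i))"
              proof -
                have "0 \<le> real n * muA pol g / 2" using muA0[of pol g] by simp
                thus ?thesis using nA[OF pol g] by linarith
              qed
              ultimately have "Lhat A \<gamma> n Ds (qP pol) (qP pol) pol - Lhat A \<gamma> n Ds g (qP pol) pol \<le> 8 * V\<^sup>2 * l / real n"
                using np by (simp add: field_simps)
              also have "\<dots> \<le> eps0" unfolding eps0_def using lVL np by (simp add: divide_right_mono)
              finally show "Lhat A \<gamma> n Ds (qP pol) (qP pol) pol - Lhat A \<gamma> n Ds g (qP pol) pol \<le> eps0" .
            qed
            thus "\<exists>q\<in>F. (\<forall>s\<in>S. \<forall>a\<in>A. q s a = Qfun P R \<gamma> pol s a) \<and> Ehat A \<gamma> n Ds F q pol \<le> eps0"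
              using qP[OF pol] by blast
          qed
          have GB: "\<forall>f\<in>F. Ehat A \<gamma> n Ds F f pi_cp \<le> eps0 \<longrightarrow> (\<exists>h. (\<forall>s\<in>S. \<forall>a\<in>A. h s a = bellman A P R \<gamma> pi_cp f s a)
              \<and> (\<Sum>x\<in>S\<times>A. pmf dD x * (h (fst x) (snd x) - f (fst x) (snd x))\<^sup>2) \<le> \<beta>)"
          proof (intro ballI impI)
            fix f assume f: "f \<in> F" and fE: "Ehat A \<gamma> n Ds F f pi_cp \<le> eps0"
            have "Lhat A \<gamma> n Ds f f pi_cp - Lhat A \<gamma> n Ds (hF f) f pi_cp \<le> Ehat A \<gamma> n Ds F f pi_cp"
              using hF[OF f] finF by (intro Ehat_ge) auto
            moreover have "Lhat A \<gamma> n Ds f f pi_cp - Lhat A \<gamma> n Ds (hF f) f pi_cp = (1 / real n) * (\<Sum>i<n. phiB f (Ds i))"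
              unfolding phiB_def by (rule Lhat_diff)
            ultimately have "(1 / real n) * (\<Sum>i<n. phiB f (Ds i)) \<le> 16 * V\<^sup>2 * L / real n" using fE unfolding eps0_def by simp
            hence "(\<Sum>i<n. phiB f (Ds i)) \<le> 16 * V\<^sup>2 * L" using np by (simp add: field_simps)
            hence "real n * muB f / 2 \<le> 32 * V\<^sup>2 * L" using nB[OF f] lVL by linarith
            hence mB: "muB f \<le> \<beta>" unfolding \<beta>_def using np by (simp add: field_simps)
            have "(\<Sum>x\<in>S\<times>A. pmf dD x * (hF f (fst x) (snd x) - f (fst x) (snd x))\<^sup>2) = muB f"
              unfolding muB_def by (simp add: power2_commute)
            thus "\<exists>h. (\<forall>s\<in>S. \<forall>a\<in>A. h s a = bellman A P R \<gamma> pi_cp f s a)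
              \<and> (\<Sum>x\<in>S\<times>A. pmf dD x * (h (fst x) (snd x) - f (fst x) (snd x))\<^sup>2) \<le> \<beta>"
              using hF[OF f] mB by (intro exI[of _ "hF f"]) auto
          qed
          have "Ds \<in> Good" unfolding Good_def using GA GB by blast
          thus False using nG by simp
        qed
      qed
      have "measure_pmf.prob DS (UNIV - Good) \<le> measure_pmf.prob DS ((\<Union>p\<in>Pol \<times> F. FA p) \<union> (\<Union>f\<in>F. FB f))"
        using cover by (intro measure_pmf.finite_measure_mono) auto
      also have "\<dots> \<le> measure_pmf.prob DS (\<Union>p\<in>Pol \<times> F. FA p) + measure_pmf.prob DS (\<Union>f\<in>F. FB f)"
        by (intro measure_Un_le) auto
      also have "measure_pmf.prob DS (\<Union>p\<in>Pol \<times> F. FA p) \<le> (\<Sum>p\<in>Pol \<times> F. measure_pmf.prob DS (FA p))"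
        using finP finF by (intro measure_pmf.finite_measure_subadditive_finite) auto
      also have "\<dots> \<le> real (card (Pol \<times> F)) * \<delta>'" using probA by (intro sum_bounded_above) auto
      also have "measure_pmf.prob DS (\<Union>f\<in>F. FB f) \<le> (\<Sum>f\<in>F. measure_pmf.prob DS (FB f))"
        using finF by (intro measure_pmf.finite_measure_subadditive_finite) auto
      also have "\<dots> \<le> real (card F) * \<delta>'" using probB by (intro sum_bounded_above) auto
      also have "real (card (Pol \<times> F)) * \<delta>' + real (card F) * \<delta>' \<le> \<delta>"
      proof -
        have "real (card (Pol \<times> F)) * \<delta>' + real (card F) * \<delta>' = (real (card Pol) + 1) * real (card F) * \<delta>'"
          using finP finF by (simp add: card_cartesian_product algebra_simps)
        also have "\<dots> \<le> (2 * real (card Pol)) * real (card F) * \<delta>'"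
          using cP d'p by (intro mult_right_mono) auto
        also have "\<dots> = \<delta>" unfolding \<delta>'_def using cF cP by (simp add: field_simps)
        finally show ?thesis .
      qed
      finally have "measure_pmf.prob DS (UNIV - Good) \<le> \<delta>" by simp
      moreover have "measure_pmf.prob DS (UNIV - Good) = 1 - measure_pmf.prob DS Good"
        using measure_pmf.prob_compl[of Good DS] by simp
      ultimately show ?thesis by simp
    qed
    have "measure_pmf.prob DS Good \<le> measure_pmf.prob DS E"
      using GoodE by (intro measure_pmf.finite_measure_mono) auto
    thus "measure_pmf.prob DS E \<ge> 1 - \<delta>" using probGood by simp
  qed
qed


theorem theorem2:
  shows "\<exists>c0 > (0::real). \<exists>c > (0::real).
    \<forall>(S::nat set) (A::nat set) (P::nat \<Rightarrow> nat \<Rightarrow> nat pmf) (R::nat \<Rightarrow> nat \<Rightarrow> real) (Rmax::real)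
      (\<gamma>::real) (d0::nat pmf) (dD::(nat \<times> nat) pmf) (F::(nat \<Rightarrow> nat \<Rightarrow> real) set)
      (Pol::policy set) (pi_cp::policy) (n::nat) (\<delta>::real).
      finite S \<and> finite A \<and>
      (\<forall>s\<in>S. \<forall>a\<in>A. set_pmf (P s a) \<subseteq> S) \<and>
      (\<forall>s\<in>S. \<forall>a\<in>A. 0 \<le> R s a \<and> R s a \<le> Rmax) \<and>
      0 \<le> \<gamma> \<and> \<gamma> < 1 \<and>
      set_pmf d0 \<subseteq> S \<and> set_pmf dD \<subseteq> S \<times> A \<and>
      finite F \<and>
      (\<forall>f\<in>F. \<forall>s\<in>S. \<forall>a\<in>A. 0 \<le> f s a \<and> f s a \<le> Rmax / (1 - \<gamma>)) \<and>
      finite Pol \<and> (\<forall>pol\<in>Pol. \<forall>s\<in>S. set_pmf (pol s) \<subseteq> A) \<and>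
      pi_cp \<in> Pol \<and>
      conc S A P \<gamma> d0 dD pi_cp < \<infinity> \<and>
      (\<forall>f\<in>F. \<exists>g\<in>F. \<forall>s\<in>S. \<forall>a\<in>A. g s a = bellman A P R \<gamma> pi_cp f s a) \<and>
      (\<forall>pol\<in>Pol. \<exists>g\<in>F. \<forall>s\<in>S. \<forall>a\<in>A. g s a = Qfun P R \<gamma> pol s a) \<and>
      n > 0 \<and> 0 < \<delta> \<and> \<delta> < 1
    \<longrightarrow>
      (let Vmax = Rmax / (1 - \<gamma>);
           L = ln (real (card F) * real (card Pol) / \<delta>);
           eps0 = c0 * Vmax\<^sup>2 * L / real n
       in measure_pmf.prob (dataset_pmf n (Dsample P R dD))
            {Ds. \<forall>pi_hat\<in>Pol.
                   (\<forall>pol\<in>Pol. JVS A \<gamma> d0 n Ds F eps0 pol \<le> JVS A \<gamma> d0 n Ds F eps0 pi_hat) \<longrightarrow>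
                   Jret P R \<gamma> d0 pi_cp - Jret P R \<gamma> d0 pi_hat
                     \<le> c * Vmax / (1 - \<gamma>) *
                        sqrt (real_of_ereal (conc S A P \<gamma> d0 dD pi_cp) * L / real n)}
          \<ge> 1 - \<delta>)"
    apply (rule exI[of _ "16::real"], rule conjI, simp)
  apply (rule exI[of _ "8::real"], rule conjI, simp)
  apply (intro allI impI)
  apply (unfold Let_def)
  apply (elim conjE)
  apply (rule main; assumption)
  done

end
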